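(* Let $K$ satisfy (K1) and (K2). For any $a,b\in[0,1]$, $$\sum_{k=1}^n\big(W_{nk}(a)-W_{nk}(b)\big)^2\le W\,n^{-1}h^{-3}\Big(\frac{8L_2}{\lambda_0}|a-b|\wedge h\Big)^2 .$$ In particular, if $\varepsilon_1,\dots,\varepsilon_n$ are i.i.d. $\mathcal N(0,\sigma^2)$, then $R_{a,b}:=\sum_{k=1}^nW_{nk}(a)\varepsilon_k-\sum_{k=1}^nW_{nk}(b)\varepsilon_k$ satisfies $\mathbb V(R_{a,b})\le\sigma^2Wn^{-1}h^{-3}\big(\frac{8L_2}{\lambda_0}|a-b|\wedge h\big)^2$.
   Context: $x_k=k/n$. (K1): $K$ nonnegative, $\int K=1$, supported in $[-1,1]$, $K_{\min}\mathbf 1_{\{|u|\le\Delta\}}\le K\le K_{\max}$ for constants $K_{\min},K_{\max},\Delta>0$. (K2): $K$ Lipschitz with constant $L_K$. For $\beta>0$ and $k_0=\lceil\beta\rceil-1$: $U(u)=(1,u,\dots,u^{k_0}/k_0!)^\top$, $\mathcal B_{nx}=\frac1{nh}\sum_lU(\tfrac{x_l-x}h)U(\tfrac{x_l-x}h)^\top K(\tfrac{x_l-x}h)$, $W_{nk}(x)=\frac1{nh}U(0)^\top\mathcal B_{nx}^{-1}U(\tfrac{x_k-x}h)K(\tfrac{x_k-x}h)$ (weights of the local polynomial estimator of order $k_0$, bandwidth $h$). Standing assumption: $h\ge1/(2n)$ and $\lambda_0>0$ is a constant with smallest eigenvalue of $\mathcal B_{nx}$ at least $\lambda_0$ for all $x\in[0,1]$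 ($n$ large). Constants: $C_*=8K_{\max}/\lambda_0$, $L_1=\sqrt e(L_K+K_{\max})$, $L_2=2\lceil\beta\rceil K_{\max}+\lceil\beta\rceil L_K$, $\widetilde C_*=L_1/(8L_2)+\sqrt eK_{\max}/\lambda_0$, $W=\max(4C_*^2,4\widetilde C_*^2)$. *)

theory Defs
  imports "HOL-Probability.Probability" "Jordan_Normal_Form.Char_Poly"
    "Jordan_Normal_Form.Gauss_Jordan_Elimination"
begin

definition lp_order :: "real \<Rightarrow> nat" where
  "lp_order \<beta> = nat \<lceil>\<beta>\<rceil> - 1"

definition Uvec :: "real \<Rightarrow> real \<Rightarrow> real Matrix.vec" where
  "Uvec \<beta> u = Matrix.vec (lp_order \<beta> + 1) (\<lambda>i. u ^ i / fact i)"

definition xpt :: "nat \<Rightarrow> nat \<Rightarrow> real" where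
  "xpt n k = real k / real n"

definition Bmat :: "(real \<Rightarrow> real) \<Rightarrow> real \<Rightarrow> nat \<Rightarrow> real \<Rightarrow> real \<Rightarrow> real Matrix.mat" where
  "Bmat K \<beta> n h x = Matrix.mat (lp_order \<beta> + 1) (lp_order \<beta> + 1)
     (\<lambda>(i, j). (1 / (real n * h)) * (\<Sum>l = 1..n.
        vec_index (Uvec \<beta> ((xpt n l - x) / h)) i * vec_index (Uvec \<beta> ((xpt n l - x) / h)) j
        * K ((xpt n l - x) / h)))"

definition Wnk :: "(real \<Rightarrow> real) \<Rightarrow> real \<Rightarrow> nat \<Rightarrow> real \<Rightarrow> nat \<Rightarrow> real \<Rightarrow> real" where
  "Wnk K \<beta> n h k x = (1 / (real n * h)) *
     scalar_prod (Uvec \<beta> 0) (the (mat_inverse (Bmat K \<beta> n h x)) *\<^sub>v Uvec \<beta> ((xpt n k - x) / h))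
     * K ((xpt n k - x) / h)"

definition Cstar :: "real \<Rightarrow> real \<Rightarrow> real" where
  "Cstar Kmax lam0 = 8 * Kmax / lam0"

definition L1const :: "real \<Rightarrow> real \<Rightarrow> real" where
  "L1const LK Kmax = sqrt (exp 1) * (LK + Kmax)"

definition L2const :: "real \<Rightarrow> real \<Rightarrow> real \<Rightarrow> real" where
  "L2const \<beta> LK Kmax = 2 * real_of_int \<lceil>\<beta>\<rceil> * Kmax + real_of_int \<lceil>\<beta>\<rceil> * LK"

definition Ctilde :: "real \<Rightarrow> real \<Rightarrow> real \<Rightarrow> real \<Rightarrow> real" where
  "Ctilde \<beta> LK Kmax lam0 = L1const LK Kmax / (8 * L2const \<beta> LK Kmax) + sqrt (exp 1) * Kmax / lam0"

definition Wconst :: "real \<Rightarrow> real \<Rightarrow> real \<Rightarrow> real \<Rightarrow> real" where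
  "Wconst \<beta> LK Kmax lam0 = max (4 * (Cstar Kmax lam0)\<^sup>2) (4 * (Ctilde \<beta> LK Kmax lam0)\<^sup>2)"

end

theory Submission
  imports Defs
begin


lemma compact_box_fun:
  "compact {f :: nat \<Rightarrow> real. (\<forall>i<D. f i \<in> {-1..1}) \<and> (\<forall>i\<ge>D. f i = 0)}"
proof -
  define S where "S = (\<lambda>i::nat. if i < D then {-1..1::real} else {0})"
  have eq: "{f :: nat \<Rightarrow> real. (\<forall>i<D. f i \<in> {-1..1}) \<and> (\<forall>i\<ge>D. f i = 0)} = PiE UNIV S"
  proof -
    have iff: "f \<in> PiE UNIV S \<longleftrightarrow> (\<forall>i<D. f i \<in> {-1..1}) \<and> (\<forall>i\<ge>D. f i = 0)" for f :: "nat \<Rightarrow> real"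
    proof -
      have iff: "f \<in> PiE UNIV S \<longleftrightarrow> (\<forall>i. f i \<in> S i)" by (simp add: PiE_UNIV_domain Pi_def)
      also have "\<dots> \<longleftrightarrow> (\<forall>i<D. f i \<in> {-1..1}) \<and> (\<forall>i\<ge>D. f i = 0)"
      proof -
        have "f i \<in> S i \<longleftrightarrow> (i < D \<longrightarrow> f i \<in> {-1..1}) \<and> (\<not> i < D \<longrightarrow> f i = 0)" for i
          by (simp add: S_def)
        then show ?thesis by (meson not_le)
      qed
      finally show ?thesis .
    qed
    show ?thesis by (rule Set.set_eqI) (simp only: iff mem_Collect_eq)
  qed
  have "compactin (product_topology (\<lambda>i. euclidean) UNIV) (PiE UNIV S)"
    by (subst compactin_PiE) (auto simp: S_def)
  then show ?thesis unfolding eq euclidean_product_topology compactin_euclidean_iff .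
qed

lemma quad_expand:
  fixes A :: "nat \<Rightarrow> nat \<Rightarrow> real"
  assumes sym: "\<forall>i<D. \<forall>j<D. A i j = A j i"
  shows "(\<Sum>i<D. (v i + t * r i) * (\<Sum>j<D. A i j * (v j + t * r j)))
    = (\<Sum>i<D. v i * (\<Sum>j<D. A i j * v j)) + 2 * t * (\<Sum>i<D. r i * (\<Sum>j<D. A i j * v j))
      + t\<^sup>2 * (\<Sum>i<D. r i * (\<Sum>j<D. A i j * r j))"
proof -
  have sw: "(\<Sum>i<D. v i * (\<Sum>j<D. A i j * r j)) = (\<Sum>i<D. r i * (\<Sum>j<D. A i j * v j))"
  proof -
    have "(\<Sum>i<D. v i * (\<Sum>j<D. A i j * r j)) = (\<Sum>i<D. \<Sum>j<D. v i * A i j * r j)"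
      by (simp add: sum_distrib_left mult.assoc)
    also have "\<dots> = (\<Sum>j<D. \<Sum>i<D. v i * A i j * r j)" by (rule sum.swap)
    also have "\<dots> = (\<Sum>j<D. \<Sum>i<D. r j * (A j i * v i))"
      using sym by (intro sum.cong refl) (auto simp: mult_ac)
    also have "\<dots> = (\<Sum>i<D. r i * (\<Sum>j<D. A i j * v j))"
      by (simp add: sum_distrib_left)
    finally show ?thesis .
  qed
  have "(\<Sum>i<D. (v i + t * r i) * (\<Sum>j<D. A i j * (v j + t * r j)))
     = (\<Sum>i<D. v i * (\<Sum>j<D. A i j * v j) + t * (v i * (\<Sum>j<D. A i j * r j))
         + t * (r i * (\<Sum>j<D. A i j * v j)) + t\<^sup>2 * (r i * (\<Sum>j<D. A i j * r j)))"
    by (intro sum.cong refl)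
       (simp add: algebra_simps sum.distrib sum_distrib_left power2_eq_square)
  also have "\<dots> = (\<Sum>i<D. v i * (\<Sum>j<D. A i j * v j)) + t * (\<Sum>i<D. v i * (\<Sum>j<D. A i j * r j))
      + t * (\<Sum>i<D. r i * (\<Sum>j<D. A i j * v j)) + t\<^sup>2 * (\<Sum>i<D. r i * (\<Sum>j<D. A i j * r j))"
    by (simp add: sum.distrib sum_distrib_left)
  finally show ?thesis using sw by simp
qed

lemma norm_expand:
  "(\<Sum>i<D. (v i + t * r i)\<^sup>2 :: real) = (\<Sum>i<D. (v i)\<^sup>2) + 2 * t * (\<Sum>i<D. r i * v i) + t\<^sup>2 * (\<Sum>i<D. (r i)\<^sup>2)"
  by (simp add: power2_eq_square algebra_simps sum.distrib sum_distrib_left)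

lemma rayleigh_fun:
  fixes A :: "nat \<Rightarrow> nat \<Rightarrow> real"
  assumes sym: "\<forall>i<D. \<forall>j<D. A i j = A j i"
    and eig: "\<And>\<mu> v. (\<exists>i<D. v i \<noteq> 0) \<Longrightarrow> (\<forall>i<D. (\<Sum>j<D. A i j * v j) = \<mu> * v i) \<Longrightarrow> \<mu> \<ge> lam"
  shows "(\<Sum>i<D. w i * (\<Sum>j<D. A i j * w j)) \<ge> lam * (\<Sum>i<D. (w i)\<^sup>2)"
proof (cases "D = 0")
  case True then show ?thesis by simp
next
  case False
  define Q where "Q = (\<lambda>f::nat\<Rightarrow>real. \<Sum>i<D. f i * (\<Sum>j<D. A i j * f j))"
  define N where "N = (\<lambda>f::nat\<Rightarrow>real. \<Sum>i<D. (f i)\<^sup>2)"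
  define S where "S = {f :: nat \<Rightarrow> real. (\<forall>i<D. f i \<in> {-1..1}) \<and> (\<forall>i\<ge>D. f i = 0)} \<inter> {f. N f = 1}"
  have contQ: "continuous_on UNIV Q" unfolding Q_def
    by (intro continuous_intros continuous_on_product_coordinates)
  have contN: "continuous_on UNIV N" unfolding N_def
    by (intro continuous_intros continuous_on_product_coordinates)
  have "closed {f. N f = 1}" by (intro closed_Collect_eq contN continuous_on_const)
  then have cS: "compact S" unfolding S_def by (intro compact_Int_closed compact_box_fun)
  define e0 where "e0 = (\<lambda>i::nat. if i = 0 then 1 else 0::real)"
  have "N e0 = (\<Sum>i<D. if i = 0 then 1 else 0)" unfolding N_def e0_def by (intro sum.cong) auto
  then have "N e0 = 1" using False by simp
  then have "e0 \<in> S" using False by (auto simp: S_def e0_def)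
  then have neS: "S \<noteq> {}" by auto
  obtain v where vS: "v \<in> S" and vmin: "\<And>y. y \<in> S \<Longrightarrow> Q v \<le> Q y"
    using continuous_attains_inf[OF cS neS continuous_on_subset[OF contQ]] by auto
  define m where "m = Q v"
  have Nv: "N v = 1" using vS by (auto simp: S_def)
  have homog: "Q y \<ge> m * N y" for y
  proof (cases "N y = 0")
    case True
    then have "\<forall>i<D. y i = 0" unfolding N_def by (simp add: sum_nonneg_eq_0_iff)
    then have "Q y = 0" unfolding Q_def by simp
    then show ?thesis using True by simp
  next
    case F: False
    have Npos: "N y > 0" using F unfolding N_def by (metis less_eq_real_def sum_nonneg zero_le_power2)
    define s where "s = sqrt (N y)"
    have spos: "s > 0" using Npos by (simp add: s_def)
    have ss: "s * s = N y" using Npos by (simp add: s_def)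
    define z where "z = (\<lambda>i. if i < D then y i / s else 0)"
    have Nz: "N z = 1"
    proof -
      have "N z = (\<Sum>i<D. (y i)\<^sup>2 / (s * s))" unfolding N_def z_def
        by (intro sum.cong refl) (simp add: power_divide power2_eq_square)
      also have "\<dots> = N y / (s * s)" unfolding N_def by (simp add: sum_divide_distrib)
      finally show ?thesis using ss Npos by simp
    qed
    have zb: "z i \<in> {-1..1}" if "i < D" for i
    proof -
      have "(z i)\<^sup>2 \<le> N z" unfolding N_def
        using member_le_sum[of i "{..<D}" "\<lambda>i. (z i)\<^sup>2"] that by auto
      then have "(z i)\<^sup>2 \<le> 1" using Nz by simp
      then show ?thesis using abs_square_le_1[of "z i"] by auto
    qed
    have "z \<in> S" using Nz zb by (auto simp: S_def z_def)
    then have "m \<le> Q z" using vmin m_def by auto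
    also have "Q z = Q y / (s * s)"
    proof -
      have "Q z = (\<Sum>i<D. (y i / s) * (\<Sum>j<D. A i j * (y j / s)))"
        unfolding Q_def z_def by (auto intro!: sum.cong)
      also have "\<dots> = (\<Sum>i<D. (y i * (\<Sum>j<D. A i j * y j)) / (s * s))"
      proof (intro sum.cong refl)
        fix i
        have "(\<Sum>j<D. A i j * (y j / s)) = (\<Sum>j<D. A i j * y j) / s"
          by (simp add: sum_divide_distrib)
        then show "(y i / s) * (\<Sum>j<D. A i j * (y j / s)) = (y i * (\<Sum>j<D. A i j * y j)) / (s * s)"
          by simp
      qed
      also have "\<dots> = Q y / (s * s)" unfolding Q_def by (simp add: sum_divide_distrib)
      finally show ?thesis .
    qed
    finally have "m \<le> Q y / N y" using ss by simp
    then show ?thesis using Npos by (simp add: field_simps)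
  qed
  define r where "r = (\<lambda>i. (\<Sum>j<D. A i j * v j) - m * v i)"
  define R where "R = (\<Sum>i<D. (r i)\<^sup>2)"
  define P where "P = Q r - m * N r"
  have key: "2 * t * R + t\<^sup>2 * P \<ge> 0" for t
  proof -
    have "Q (\<lambda>i. v i + t * r i) - m * N (\<lambda>i. v i + t * r i) \<ge> 0" using homog[of "\<lambda>i. v i + t * r i"] by simp
    also have "Q (\<lambda>i. v i + t * r i) - m * N (\<lambda>i. v i + t * r i)
       = (Q v - m * N v) + 2 * t * ((\<Sum>i<D. r i * (\<Sum>j<D. A i j * v j)) - m * (\<Sum>i<D. r i * v i)) + t\<^sup>2 * P"
    proof -
      have q1: "Q (\<lambda>i. v i + t * r i) = Q v + 2 * t * (\<Sum>i<D. r i * (\<Sum>j<D. A i j * v j)) + t\<^sup>2 * Q r"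
        unfolding Q_def by (rule quad_expand[OF sym])
      have n1: "N (\<lambda>i. v i + t * r i) = N v + 2 * t * (\<Sum>i<D. r i * v i) + t\<^sup>2 * N r"
        unfolding N_def by (rule norm_expand)
      show ?thesis unfolding q1 n1 P_def by (simp add: algebra_simps)
    qed
    also have "(\<Sum>i<D. r i * (\<Sum>j<D. A i j * v j)) - m * (\<Sum>i<D. r i * v i) = R"
    proof -
      have "(\<Sum>i<D. r i * (\<Sum>j<D. A i j * v j)) - m * (\<Sum>i<D. r i * v i)
          = (\<Sum>i<D. r i * (\<Sum>j<D. A i j * v j) - m * (r i * v i))"
        by (simp add: sum_subtractf sum_distrib_left)
      also have "\<dots> = R" unfolding R_def
        by (intro sum.cong refl) (simp add: r_def power2_eq_square algebra_simps)
      finally show ?thesis .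
    qed
    finally show ?thesis using Nv m_def by simp
  qed
  have R0: "R = 0"
  proof (rule ccontr)
    assume "R \<noteq> 0"
    then have Rp: "R > 0" unfolding R_def by (metis less_eq_real_def sum_nonneg zero_le_power2)
    define t where "t = - R / (\<bar>P\<bar> + 1)"
    have tn: "t < 0" using Rp by (simp add: t_def divide_pos_pos)
    have "t * \<bar>P\<bar> \<ge> - R" using Rp by (simp add: t_def field_simps)
    have "t\<^sup>2 * P \<le> t\<^sup>2 * \<bar>P\<bar>" by (simp add: mult_left_mono)
    also have "\<dots> = t * (t * \<bar>P\<bar>)" by (simp add: power2_eq_square)
    also have "\<dots> \<le> t * (- R)" using \<open>t * \<bar>P\<bar> \<ge> - R\<close> tn by (metis mult_left_mono_neg less_imp_le)
    finally have "2 * t * R + t\<^sup>2 * P \<le> t * R" by (simp add: algebra_simps)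
    also have "t * R < 0" using tn Rp by (simp add: mult_neg_pos)
    finally show False using key[of t] by simp
  qed
  have "\<forall>i<D. r i = 0" using R0 unfolding R_def by (simp add: sum_nonneg_eq_0_iff)
  then have ev: "\<forall>i<D. (\<Sum>j<D. A i j * v j) = m * v i" unfolding r_def by simp
  have "\<exists>i<D. v i \<noteq> 0"
  proof (rule ccontr)
    assume "\<not> ?thesis" then have "N v = 0" unfolding N_def by simp
    then show False using Nv by simp
  qed
  then have "m \<ge> lam" using eig ev by blast
  moreover have "N w \<ge> 0" unfolding N_def by (simp add: sum_nonneg)
  ultimately have "lam * N w \<le> m * N w" by (simp add: mult_right_mono)
  also have "\<dots> \<le> Q w" by (rule homog)
  finally show ?thesis unfolding Q_def N_def .
qed


lemma sp_sum: "v \<in> carrier_vec D \<Longrightarrow> w \<in> carrier_vec D \<Longrightarrow> v \<bullet> w = (\<Sum>i<D. v$i * w$i)"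
  by (simp add: scalar_prod_def atLeast0LessThan)

lemma mv_idx: "A \<in> carrier_mat D D \<Longrightarrow> v \<in> carrier_vec D \<Longrightarrow> i < D \<Longrightarrow>
   (A *\<^sub>v v) $ i = (\<Sum>j<D. A $$ (i, j) * v $ j)"
  by (auto simp: scalar_prod_def atLeast0LessThan intro!: sum.cong)

lemma quad_form_bound:
  fixes A :: "real mat"
  assumes A: "A \<in> carrier_mat D D" and sym: "\<forall>i<D. \<forall>j<D. A $$ (i, j) = A $$ (j, i)"
    and eig: "\<forall>\<mu>. eigenvalue A \<mu> \<longrightarrow> \<mu> \<ge> lam"
    and v: "v \<in> carrier_vec D"
  shows "v \<bullet> (A *\<^sub>v v) \<ge> lam * (\<Sum>i<D. (v$i)\<^sup>2)"
proof -
  have eig': "\<mu> \<ge> lam" if nz: "\<exists>i<D. f i \<noteq> 0" and ev: "\<forall>i<D. (\<Sum>j<D. A $$ (i, j) * f j) = \<mu> * f i"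
    for \<mu> f
  proof -
    define w where "w = vec D f"
    have w: "w \<in> carrier_vec D" by (simp add: w_def)
    have "w \<noteq> 0\<^sub>v D"
    proof
      assume h: "w = 0\<^sub>v D"
      obtain i where i: "i < D" "f i \<noteq> 0" using nz by blast
      have "w $ i = 0\<^sub>v D $ i" using h by simp
      then show False using i by (simp add: w_def)
    qed
    moreover have "A *\<^sub>v w = \<mu> \<cdot>\<^sub>v w"
    proof (rule eq_vecI)
      show "dim_vec (A *\<^sub>v w) = dim_vec (\<mu> \<cdot>\<^sub>v w)" using A w by simp
      fix i assume "i < dim_vec (\<mu> \<cdot>\<^sub>v w)"
      then have i: "i < D" using w by simp
      have "(A *\<^sub>v w) $ i = (\<Sum>j<D. A $$ (i, j) * f j)"
        using mv_idx[OF A w i] by (simp add: w_def)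
      then show "(A *\<^sub>v w) $ i = (\<mu> \<cdot>\<^sub>v w) $ i" using ev i by (simp add: w_def)
    qed
    ultimately have "eigenvector A w \<mu>" using A w by (simp add: eigenvector_def)
    then have "eigenvalue A \<mu>" by (auto simp: eigenvalue_def)
    then show ?thesis using eig by blast
  qed
  have "lam * (\<Sum>i<D. (v$i)\<^sup>2) \<le> (\<Sum>i<D. v$i * (\<Sum>j<D. A $$ (i, j) * v$j))"
    by (rule rayleigh_fun[where A="\<lambda>i j. A $$ (i, j)"]) (use sym eig' in auto)
  also have "\<dots> = v \<bullet> (A *\<^sub>v v)"
    using A v by (simp add: sp_sum[of v D "A *\<^sub>v v"] mv_idx[symmetric])
  finally show ?thesis .
qed

lemma inverse_exists:
  fixes A :: "real mat"
  assumes A: "A \<in> carrier_mat D D"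
    and eig: "\<forall>\<mu>. eigenvalue A \<mu> \<longrightarrow> \<mu> \<ge> lam" and lam: "lam > 0"
  shows "\<exists>Ai. mat_inverse A = Some Ai \<and> A * Ai = 1\<^sub>m D \<and> Ai * A = 1\<^sub>m D \<and> Ai \<in> carrier_mat D D"
proof (cases "mat_inverse A")
  case None
  have "det A = 0" using mat_inverse(1)[OF A None] det_non_zero_imp_unit[OF A] by metis
  then obtain v where v: "v \<in> carrier_vec D" "v \<noteq> 0\<^sub>v D" "A *\<^sub>v v = 0\<^sub>v D"
    using det_0_iff_vec_prod_zero[OF A] by blast
  then have "eigenvector A v 0" using A by (auto simp: eigenvector_def)
  then have "eigenvalue A 0" by (auto simp: eigenvalue_def)
  then show ?thesis using eig lam by force
next
  case (Some Ai)
  then show ?thesis using mat_inverse(2)[OF A] by auto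
qed

lemma inverse_bound:
  fixes A Ai :: "real mat"
  assumes A: "A \<in> carrier_mat D D" and sym: "\<forall>i<D. \<forall>j<D. A $$ (i, j) = A $$ (j, i)"
    and eig: "\<forall>\<mu>. eigenvalue A \<mu> \<longrightarrow> \<mu> \<ge> lam" and lam: "lam > 0"
    and Ai: "Ai \<in> carrier_mat D D" "A * Ai = 1\<^sub>m D"
    and y: "y \<in> carrier_vec D"
  shows "L2_set (\<lambda>i. (Ai *\<^sub>v y) $ i) {..<D} \<le> L2_set (\<lambda>i. y $ i) {..<D} / lam"
proof -
  define v where "v = Ai *\<^sub>v y"
  have v: "v \<in> carrier_vec D" using Ai y by (simp add: v_def)
  have Av: "A *\<^sub>v v = y" unfolding v_def
    using A Ai y by (simp add: assoc_mult_mat_vec[symmetric])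
  define nv where "nv = L2_set (\<lambda>i. v $ i) {..<D}"
  define ny where "ny = L2_set (\<lambda>i. y $ i) {..<D}"
  have nv2: "nv\<^sup>2 = (\<Sum>i<D. (v$i)\<^sup>2)" unfolding nv_def L2_set_def
    by (simp add: sum_nonneg)
  have "lam * nv\<^sup>2 \<le> v \<bullet> (A *\<^sub>v v)" unfolding nv2
    by (rule quad_form_bound[OF A sym eig v])
  also have "\<dots> = (\<Sum>i<D. v$i * y$i)" using Av v y by (simp add: sp_sum)
  also have "\<dots> \<le> (\<Sum>i<D. \<bar>v$i\<bar> * \<bar>y$i\<bar>)"
    by (intro sum_mono) (simp add: abs_mult[symmetric])
  also have "\<dots> \<le> nv * ny" unfolding nv_def ny_def by (rule L2_set_mult_ineq)
  finally have *: "lam * nv\<^sup>2 \<le> nv * ny" .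
  have "nv \<le> ny / lam"
  proof (cases "nv = 0")
    case True then show ?thesis using lam by (simp add: ny_def)
  next
    case False
    then have "nv > 0" unfolding nv_def using L2_set_nonneg less_eq_real_def by metis
    then have "lam * nv \<le> ny" using * by (simp add: power2_eq_square mult_ac)
    then show ?thesis using lam by (simp add: field_simps)
  qed
  then show ?thesis unfolding nv_def ny_def v_def .
qed


lemma abs_le_L2: "finite A \<Longrightarrow> i \<in> A \<Longrightarrow> \<bar>f i\<bar> \<le> L2_set f A"
proof -
  assume "finite A" "i \<in> A"
  then have "\<bar>f i\<bar> \<le> L2_set (\<lambda>i. \<bar>f i\<bar>) A" by (rule member_le_L2_set)
  also have "L2_set (\<lambda>i. \<bar>f i\<bar>) A = L2_set f A" unfolding L2_set_def by simp
  finally show ?thesis .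
qed

lemma L2_abs: "L2_set (\<lambda>i. \<bar>f i\<bar>) A = L2_set f A" unfolding L2_set_def by simp

lemma L2_mono_abs: "(\<And>i. i \<in> A \<Longrightarrow> \<bar>f i\<bar> \<le> g i) \<Longrightarrow> L2_set f A \<le> L2_set g A"
  by (subst L2_abs[symmetric], rule L2_set_mono) auto

lemma L2_mat_vec:
  fixes M :: "real mat"
  assumes M: "M \<in> carrier_mat D D" and v: "v \<in> carrier_vec D"
    and c: "\<forall>i<D. \<forall>j<D. \<bar>M $$ (i,j)\<bar> \<le> c"
  shows "L2_set (\<lambda>i. (M *\<^sub>v v) $ i) {..<D} \<le> real D * c * L2_set (\<lambda>i. v$i) {..<D}"
proof (cases "D = 0")
  case True then show ?thesis by simp
next
  case False
  define nv where "nv = L2_set (\<lambda>i. v$i) {..<D}"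
  have nv0: "nv \<ge> 0" by (simp add: nv_def)
  have c0: "c \<ge> 0" using c False by (meson abs_ge_zero order_trans not_gr_zero)
  have row: "\<bar>(M *\<^sub>v v) $ i\<bar> \<le> sqrt (real D) * c * nv" if i: "i < D" for i
  proof -
    have "\<bar>(M *\<^sub>v v) $ i\<bar> = \<bar>\<Sum>j<D. M$$(i,j) * v$j\<bar>" using mv_idx[OF M v i] by simp
    also have "\<dots> \<le> (\<Sum>j<D. \<bar>M$$(i,j)\<bar> * \<bar>v$j\<bar>)" by (rule order_trans[OF sum_abs]) (simp add: abs_mult)
    also have "\<dots> \<le> L2_set (\<lambda>j. M$$(i,j)) {..<D} * nv" unfolding nv_def by (rule L2_set_mult_ineq)
    also have "\<dots> \<le> L2_set (\<lambda>j. c) {..<D} * nv"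
      by (intro mult_right_mono nv0 L2_mono_abs) (use c i in auto)
    also have "L2_set (\<lambda>j. c) {..<D} = sqrt (real D) * c" using c0 by (simp add: L2_set_constant)
    finally show ?thesis .
  qed
  have "L2_set (\<lambda>i. (M *\<^sub>v v) $ i) {..<D} \<le> L2_set (\<lambda>i. sqrt (real D) * c * nv) {..<D}"
    by (rule L2_mono_abs) (use row in auto)
  also have "\<dots> = sqrt (real D) * (sqrt (real D) * c * nv)" using c0 nv0 by (simp add: L2_set_constant)
  also have "\<dots> = real D * c * nv" by (simp add: mult.assoc[symmetric])
  finally show ?thesis unfolding nv_def .
qed

lemma pow_diff_le:
  fixes u v :: real
  assumes "\<bar>u\<bar> \<le> 1" "\<bar>v\<bar> \<le> 1"
  shows "\<bar>u^i - v^i\<bar> \<le> real i * \<bar>u - v\<bar>"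
proof (induction i)
  case 0 then show ?case by simp
next
  case (Suc i)
  have "u^Suc i - v^Suc i = u * (u^i - v^i) + v^i * (u - v)" by (simp add: algebra_simps)
  then have "\<bar>u^Suc i - v^Suc i\<bar> \<le> \<bar>u\<bar> * \<bar>u^i - v^i\<bar> + \<bar>v\<bar>^i * \<bar>u - v\<bar>"
    by (metis abs_mult abs_triangle_ineq power_abs)
  also have "\<dots> \<le> 1 * (real i * \<bar>u - v\<bar>) + 1 * \<bar>u - v\<bar>"
    by (intro add_mono mult_mono Suc.IH assms power_le_one) (auto simp: assms)
  finally show ?case by (simp add: algebra_simps)
qed

lemma sum_inv_fact_le: "(\<Sum>i<m. 1 / fact i) \<le> exp (1::real)"
proof -
  have s: "summable (\<lambda>n. 1 / fact n :: real)"
    using summable_exp_generic[of "1::real"] by (simp add: divide_inverse)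
  have "exp (1::real) = (\<Sum>n. 1 / fact n)" by (simp add: exp_def divide_inverse)
  moreover have "(\<Sum>i<m. 1 / fact i) \<le> (\<Sum>n. 1 / fact n :: real)"
    by (rule sum_le_suminf[OF s]) auto
  ultimately show ?thesis by simp
qed

lemma sum_sq_inv_fact_le: "(\<Sum>i<m. (1 / fact i)\<^sup>2) \<le> exp (1::real)"
proof -
  have "(\<Sum>i<m. (1 / fact i)\<^sup>2) \<le> (\<Sum>i<m. 1 / fact i :: real)"
  proof (intro sum_mono)
    fix i :: nat
    have f: "(1::real) \<le> fact i" by simp
    then have "1 / fact i \<le> (1::real)" by simp
    moreover have "0 \<le> 1 / (fact i :: real)" by simp
    ultimately show "(1 / fact i)\<^sup>2 \<le> (1 / fact i :: real)"
      by (metis power2_eq_square mult_left_le)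
  qed
  also have "\<dots> \<le> exp 1" by (rule sum_inv_fact_le)
  finally show ?thesis .
qed

lemma sum_sq_i_fact_le: "(\<Sum>i<m. (real i / fact i)\<^sup>2) \<le> exp (1::real)"
proof (cases m)
  case 0 then show ?thesis by simp
next
  case (Suc k)
  have "(\<Sum>i<m. (real i / fact i)\<^sup>2) = (\<Sum>i<k. (real (Suc i) / fact (Suc i))\<^sup>2)"
    unfolding Suc sum.lessThan_Suc_shift by simp
  also have "\<dots> = (\<Sum>i<k. (1 / fact i)\<^sup>2)"
    by (intro sum.cong refl) (simp add: fact_Suc del: of_nat_Suc)
  also have "\<dots> \<le> exp 1" by (rule sum_sq_inv_fact_le)
  finally show ?thesis .
qed


definition gv :: "(real \<Rightarrow> real) \<Rightarrow> real \<Rightarrow> real \<Rightarrow> real vec" where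
  "gv K \<beta> u = vec (lp_order \<beta> + 1) (\<lambda>i. K u * (u ^ i / fact i))"

lemma gv_carrier: "gv K \<beta> u \<in> carrier_vec (lp_order \<beta> + 1)" by (simp add: gv_def)

lemma gv_idx: "i < lp_order \<beta> + 1 \<Longrightarrow> gv K \<beta> u $ i = K u * (u ^ i / fact i)" by (simp add: gv_def)

lemma comp_bound:
  fixes K :: "real \<Rightarrow> real"
  assumes Ksupp: "\<forall>u. \<bar>u\<bar> > 1 \<longrightarrow> K u = 0" and Knn: "\<forall>u. K u \<ge> 0"
    and Kup: "\<forall>u. K u \<le> Kmax" and Klip: "\<forall>u v. \<bar>K u - K v\<bar> \<le> LK * \<bar>u - v\<bar>"
  shows "\<bar>K u * (u^i / fact i) - K v * (v^i / fact i)\<bar> \<le> (Kmax * (real i / fact i) + LK * (1 / fact i)) * \<bar>u - v\<bar>"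
proof -
  have f1: "(1::real) \<le> fact i" by simp
  have Kmax0: "Kmax \<ge> 0" using Knn Kup by (meson order_trans)
  have LK0: "LK * \<bar>u - v\<bar> \<ge> 0" using Klip by (meson abs_ge_zero order_trans)
  have pw: "\<bar>w ^ i / fact i\<bar> \<le> 1 / fact i" if "\<bar>w\<bar> \<le> 1" for w :: real
  proof -
    have "\<bar>w ^ i\<bar> \<le> 1" using that by (simp add: power_abs power_le_one)
    then show ?thesis by (simp add: abs_divide divide_right_mono)
  qed
  have extra: "0 \<le> Kmax * (real i / fact i) * \<bar>u - v\<bar>" using Kmax0 by simp
  consider (both) "\<bar>u\<bar> \<le> 1" "\<bar>v\<bar> \<le> 1" | (uin) "\<bar>u\<bar> \<le> 1" "\<bar>v\<bar> > 1" | (vin) "\<bar>u\<bar> > 1" "\<bar>v\<bar> \<le> 1"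
    | (none) "\<bar>u\<bar> > 1" "\<bar>v\<bar> > 1" by linarith
  then show ?thesis
  proof cases
    case both
    have "K u * (u^i / fact i) - K v * (v^i / fact i) = K u * ((u^i - v^i) / fact i) + (v^i / fact i) * (K u - K v)"
      by (simp add: algebra_simps diff_divide_distrib)
    then have "\<bar>K u * (u^i / fact i) - K v * (v^i / fact i)\<bar> \<le> \<bar>K u * ((u^i - v^i) / fact i)\<bar> + \<bar>(v^i / fact i) * (K u - K v)\<bar>"
      by (metis abs_triangle_ineq)
    also have "\<dots> = \<bar>K u\<bar> * (\<bar>u^i - v^i\<bar> / fact i) + \<bar>v^i / fact i\<bar> * \<bar>K u - K v\<bar>"
      by (simp add: abs_mult abs_divide)
    also have "\<dots> \<le> Kmax * (real i * \<bar>u - v\<bar> / fact i) + (1 / fact i) * (LK * \<bar>u - v\<bar>)"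
      using Knn Kup Klip pw[OF both(2)] pow_diff_le[OF both, of i] Kmax0
      by (intro add_mono mult_mono divide_right_mono) auto
    finally show ?thesis by (simp add: algebra_simps)
  next
    case uin
    have "\<bar>K u * (u^i / fact i) - K v * (v^i / fact i)\<bar> = \<bar>K u - K v\<bar> * \<bar>u^i / fact i\<bar>"
      using Ksupp uin by (simp add: abs_mult)
    also have "\<dots> \<le> (LK * \<bar>u - v\<bar>) * (1 / fact i)"
      using Klip pw[OF uin(1)] LK0 by (intro mult_mono) auto
    finally show ?thesis using extra by (simp add: algebra_simps)
  next
    case vin
    have "\<bar>K u * (u^i / fact i) - K v * (v^i / fact i)\<bar> = \<bar>K u - K v\<bar> * \<bar>v^i / fact i\<bar>"
      using Ksupp vin by (simp add: abs_mult)
    also have "\<dots> \<le> (LK * \<bar>u - v\<bar>) * (1 / fact i)"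
      using Klip pw[OF vin(2)] LK0 by (intro mult_mono) auto
    finally show ?thesis using extra by (simp add: algebra_simps)
  next
    case none
    have e2: "0 \<le> (LK * \<bar>u - v\<bar>) * (1 / fact i)" using LK0 by simp
    have eq: "(Kmax * (real i / fact i) + LK * (1 / fact i)) * \<bar>u - v\<bar>
       = Kmax * (real i / fact i) * \<bar>u - v\<bar> + (LK * \<bar>u - v\<bar>) * (1 / fact i)"
      by (simp add: algebra_simps)
    show ?thesis using Ksupp none extra e2 unfolding eq by simp
  qed
qed

lemma gv_lip:
  fixes K :: "real \<Rightarrow> real"
  assumes Ksupp: "\<forall>u. \<bar>u\<bar> > 1 \<longrightarrow> K u = 0" and Knn: "\<forall>u. K u \<ge> 0"
    and Kup: "\<forall>u. K u \<le> Kmax" and Klip: "\<forall>u v. \<bar>K u - K v\<bar> \<le> LK * \<bar>u - v\<bar>"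
    and LK0: "LK \<ge> 0"
  shows "L2_set (\<lambda>i. gv K \<beta> u $ i - gv K \<beta> v $ i) {..<lp_order \<beta> + 1} \<le> sqrt (exp 1) * (LK + Kmax) * \<bar>u - v\<bar>"
proof -
  define D where "D = lp_order \<beta> + 1"
  have Kmax0: "Kmax \<ge> 0" using Knn Kup by (meson order_trans)
  have "L2_set (\<lambda>i. gv K \<beta> u $ i - gv K \<beta> v $ i) {..<D}
      \<le> L2_set (\<lambda>i. (Kmax * (real i / fact i) + LK * (1 / fact i)) * \<bar>u - v\<bar>) {..<D}"
  proof (rule L2_mono_abs)
    fix i assume "i \<in> {..<D}"
    then have "gv K \<beta> u $ i - gv K \<beta> v $ i = K u * (u^i / fact i) - K v * (v^i / fact i)"
      by (simp add: gv_idx D_def)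
    then show "\<bar>gv K \<beta> u $ i - gv K \<beta> v $ i\<bar> \<le> (Kmax * (real i / fact i) + LK * (1 / fact i)) * \<bar>u - v\<bar>"
      using comp_bound[OF assms(1-4), of u i v] by simp
  qed
  also have "\<dots> = \<bar>u - v\<bar> * L2_set (\<lambda>i. Kmax * (real i / fact i) + LK * (1 / fact i)) {..<D}"
    by (simp add: L2_set_right_distrib mult.commute)
  finally have A: "L2_set (\<lambda>i. gv K \<beta> u $ i - gv K \<beta> v $ i) {..<D}
      \<le> \<bar>u - v\<bar> * L2_set (\<lambda>i. Kmax * (real i / fact i) + LK * (1 / fact i)) {..<D}" .
  have "L2_set (\<lambda>i. Kmax * (real i / fact i) + LK * (1 / fact i)) {..<D}
      \<le> L2_set (\<lambda>i. Kmax * (real i / fact i)) {..<D} + L2_set (\<lambda>i. LK * (1 / fact i)) {..<D}"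
    by (rule L2_set_triangle_ineq)
  also have "L2_set (\<lambda>i. Kmax * (real i / fact i)) {..<D} = Kmax * L2_set (\<lambda>i. real i / fact i) {..<D}"
    using Kmax0 by (simp add: L2_set_right_distrib)
  also have "L2_set (\<lambda>i. LK * (1 / fact i)) {..<D} = LK * L2_set (\<lambda>i. 1 / fact i) {..<D}"
    using LK0 by (simp add: L2_set_right_distrib)
  finally have B1: "L2_set (\<lambda>i. Kmax * (real i / fact i) + LK * (1 / fact i)) {..<D}
     \<le> Kmax * L2_set (\<lambda>i. real i / fact i) {..<D} + LK * L2_set (\<lambda>i. 1 / fact i) {..<D}" .
  have e1: "L2_set (\<lambda>i. real i / fact i) {..<D} \<le> sqrt (exp 1)"
    unfolding L2_set_def by (intro real_sqrt_le_mono sum_sq_i_fact_le)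
  have e2: "L2_set (\<lambda>i. 1 / fact i) {..<D} \<le> sqrt (exp 1)"
    unfolding L2_set_def by (intro real_sqrt_le_mono sum_sq_inv_fact_le)
  have "Kmax * L2_set (\<lambda>i. real i / fact i) {..<D} + LK * L2_set (\<lambda>i. 1 / fact i) {..<D}
      \<le> Kmax * sqrt (exp 1) + LK * sqrt (exp 1)"
    using Kmax0 LK0 e1 e2 by (intro add_mono mult_left_mono) auto
  with B1 have B: "L2_set (\<lambda>i. Kmax * (real i / fact i) + LK * (1 / fact i)) {..<D}
      \<le> sqrt (exp 1) * (LK + Kmax)" by (simp add: algebra_simps)
  have "\<bar>u - v\<bar> * L2_set (\<lambda>i. Kmax * (real i / fact i) + LK * (1 / fact i)) {..<D}
      \<le> \<bar>u - v\<bar> * (sqrt (exp 1) * (LK + Kmax))"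
    using B by (intro mult_left_mono) auto
  with A show ?thesis by (simp add: D_def mult_ac)
qed


lemma gv_norm:
  fixes K :: "real \<Rightarrow> real"
  assumes Ksupp: "\<forall>u. \<bar>u\<bar> > 1 \<longrightarrow> K u = 0" and Knn: "\<forall>u. K u \<ge> 0"
    and Kup: "\<forall>u. K u \<le> Kmax"
  shows "L2_set (\<lambda>i. gv K \<beta> u $ i) {..<lp_order \<beta> + 1} \<le> sqrt (exp 1) * Kmax"
proof -
  have Kmax0: "Kmax \<ge> 0" using Knn Kup by (meson order_trans)
  show ?thesis
  proof (cases "\<bar>u\<bar> > 1")
    case True
    then have "L2_set (\<lambda>i. gv K \<beta> u $ i) {..<lp_order \<beta> + 1} = 0"
      using Ksupp by (intro L2_set_0') (simp add: gv_idx)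
    then show ?thesis using Kmax0 by simp
  next
    case False
    have "L2_set (\<lambda>i. gv K \<beta> u $ i) {..<lp_order \<beta> + 1} \<le> L2_set (\<lambda>i. Kmax * (1 / fact i)) {..<lp_order \<beta> + 1}"
    proof (rule L2_mono_abs)
      fix i assume i: "i \<in> {..<lp_order \<beta> + 1}"
      have "\<bar>u ^ i\<bar> \<le> 1" using False by (simp add: power_abs power_le_one)
      then have "\<bar>u ^ i / fact i\<bar> \<le> 1 / fact i" by (simp add: abs_divide divide_right_mono)
      then have "\<bar>K u\<bar> * \<bar>u ^ i / fact i\<bar> \<le> Kmax * (1 / fact i)"
        using Knn Kup Kmax0 by (intro mult_mono) auto
      then show "\<bar>gv K \<beta> u $ i\<bar> \<le> Kmax * (1 / fact i)" using i by (simp add: gv_idx abs_mult)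
    qed
    also have "\<dots> = Kmax * L2_set (\<lambda>i. 1 / fact i) {..<lp_order \<beta> + 1}"
      using Kmax0 by (simp add: L2_set_right_distrib)
    also have "\<dots> \<le> Kmax * sqrt (exp 1)"
    proof -
      have "L2_set (\<lambda>i. 1 / fact i) {..<lp_order \<beta> + 1} \<le> sqrt (exp 1)"
        unfolding L2_set_def by (intro real_sqrt_le_mono sum_sq_inv_fact_le)
      then show ?thesis using Kmax0 by (intro mult_left_mono)
    qed
    finally show ?thesis by (simp add: mult.commute)
  qed
qed

definition mf :: "(real \<Rightarrow> real) \<Rightarrow> nat \<Rightarrow> nat \<Rightarrow> real \<Rightarrow> real" where
  "mf K i j u = (u ^ i / fact i) * (u ^ j / fact j) * K u"

lemma mf_lip:
  fixes K :: "real \<Rightarrow> real"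
  assumes Ksupp: "\<forall>u. \<bar>u\<bar> > 1 \<longrightarrow> K u = 0" and Knn: "\<forall>u. K u \<ge> 0"
    and Kup: "\<forall>u. K u \<le> Kmax" and Klip: "\<forall>u v. \<bar>K u - K v\<bar> \<le> LK * \<bar>u - v\<bar>"
    and LK0: "LK \<ge> 0"
  shows "\<bar>mf K i j u - mf K i j v\<bar> \<le> (2 * Kmax + LK) * \<bar>u - v\<bar>"
proof -
  have Kmax0: "Kmax \<ge> 0" using Knn Kup by (meson order_trans)
  have pw: "\<bar>w ^ k / fact k\<bar> \<le> 1" if "\<bar>w\<bar> \<le> 1" for w :: real and k
  proof -
    have "\<bar>w ^ k\<bar> \<le> 1" using that by (simp add: power_abs power_le_one)
    moreover have "(1::real) \<le> fact k" by simp
    ultimately have "\<bar>w ^ k\<bar> \<le> fact k" by linarith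
    then show ?thesis by (simp add: abs_divide divide_le_eq_1)
  qed
  have ratio: "real k * \<bar>u - v\<bar> / fact k \<le> \<bar>u - v\<bar>" for k
  proof -
    have "real k \<le> fact k" using fact_ge_self[of k] by (metis of_nat_fact of_nat_le_iff)
    then have "real k * \<bar>u - v\<bar> \<le> fact k * \<bar>u - v\<bar>" by (intro mult_right_mono) auto
    then show ?thesis by (simp add: divide_le_eq mult.commute)
  qed
  define p where "p = (\<lambda>w::real. (w ^ i / fact i) * (w ^ j / fact j))"
  have mfp: "mf K i j w = p w * K w" for w by (simp add: mf_def p_def)
  have pb: "\<bar>p w\<bar> \<le> 1" if "\<bar>w\<bar> \<le> 1" for w
    unfolding p_def abs_mult using pw[OF that, of i] pw[OF that, of j]
    by (metis abs_ge_zero mult_le_one)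
  have LKuv: "LK * \<bar>u - v\<bar> \<ge> 0" using LK0 by simp
  have extra: "0 \<le> 2 * Kmax * \<bar>u - v\<bar>" using Kmax0 by simp
  consider (both) "\<bar>u\<bar> \<le> 1" "\<bar>v\<bar> \<le> 1" | (uin) "\<bar>u\<bar> \<le> 1" "\<bar>v\<bar> > 1" | (vin) "\<bar>u\<bar> > 1" "\<bar>v\<bar> \<le> 1"
    | (none) "\<bar>u\<bar> > 1" "\<bar>v\<bar> > 1" by linarith
  then show ?thesis
  proof cases
    case both
    have pd: "\<bar>p u - p v\<bar> \<le> 2 * \<bar>u - v\<bar>"
    proof -
      have "p u - p v = ((u^i - v^i) / fact i) * (u^j / fact j) + (v^i / fact i) * ((u^j - v^j) / fact j)"
        unfolding p_def by (simp add: algebra_simps diff_divide_distrib)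
      then have "\<bar>p u - p v\<bar> \<le> \<bar>(u^i - v^i) / fact i\<bar> * \<bar>u^j / fact j\<bar> + \<bar>v^i / fact i\<bar> * \<bar>(u^j - v^j) / fact j\<bar>"
        by (metis abs_mult abs_triangle_ineq)
      also have "\<dots> \<le> (real i * \<bar>u - v\<bar> / fact i) * 1 + 1 * (real j * \<bar>u - v\<bar> / fact j)"
        using pw[OF both(1), of j] pw[OF both(2), of i] pow_diff_le[OF both, of i] pow_diff_le[OF both, of j]
        by (intro add_mono mult_mono) (auto simp: abs_divide divide_right_mono)
      also have "\<dots> \<le> \<bar>u - v\<bar> + \<bar>u - v\<bar>" using ratio[of i] ratio[of j] by simp
      finally show ?thesis by simp
    qed
    have "mf K i j u - mf K i j v = (p u - p v) * K u + p v * (K u - K v)"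
      unfolding mfp by (simp add: algebra_simps)
    then have "\<bar>mf K i j u - mf K i j v\<bar> \<le> \<bar>p u - p v\<bar> * \<bar>K u\<bar> + \<bar>p v\<bar> * \<bar>K u - K v\<bar>"
      by (metis abs_mult abs_triangle_ineq)
    also have "\<dots> \<le> (2 * \<bar>u - v\<bar>) * Kmax + 1 * (LK * \<bar>u - v\<bar>)"
      using pd pb[OF both(2)] Knn Kup Klip by (intro add_mono mult_mono) auto
    finally show ?thesis by (simp add: algebra_simps)
  next
    case uin
    have "\<bar>mf K i j u - mf K i j v\<bar> = \<bar>p u\<bar> * \<bar>K u - K v\<bar>"
      using Ksupp uin by (simp add: mfp abs_mult)
    also have "\<dots> \<le> 1 * (LK * \<bar>u - v\<bar>)"
      using pb[OF uin(1)] Klip by (intro mult_mono) auto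
    finally show ?thesis using extra by (simp add: algebra_simps)
  next
    case vin
    have "\<bar>mf K i j u - mf K i j v\<bar> = \<bar>p v\<bar> * \<bar>K u - K v\<bar>"
      using Ksupp vin by (simp add: mfp abs_mult)
    also have "\<dots> \<le> 1 * (LK * \<bar>u - v\<bar>)"
      using pb[OF vin(2)] Klip by (intro mult_mono) auto
    finally show ?thesis using extra by (simp add: algebra_simps)
  next
    case none
    then show ?thesis using Ksupp LKuv extra by (simp add: mfp algebra_simps)
  qed
qed

lemma mf_zero: "\<forall>u. \<bar>u\<bar> > 1 \<longrightarrow> K u = 0 \<Longrightarrow> \<bar>u\<bar> > 1 \<Longrightarrow> mf K i j u = 0"
  by (simp add: mf_def)

lemma Uvec_carrier: "Uvec \<beta> u \<in> carrier_vec (lp_order \<beta> + 1)" by (simp add: Uvec_def)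
lemma Uvec_idx: "i < lp_order \<beta> + 1 \<Longrightarrow> Uvec \<beta> u $ i = u ^ i / fact i" by (simp add: Uvec_def)

lemma Bmat_carrier: "Bmat K \<beta> n h x \<in> carrier_mat (lp_order \<beta> + 1) (lp_order \<beta> + 1)"
  by (simp add: Bmat_def)

lemma Bmat_idx: "i < lp_order \<beta> + 1 \<Longrightarrow> j < lp_order \<beta> + 1 \<Longrightarrow>
  Bmat K \<beta> n h x $$ (i, j) = (1 / (real n * h)) * (\<Sum>l = 1..n. mf K i j ((xpt n l - x) / h))"
  unfolding Bmat_def mf_def by (simp add: Uvec_idx ac_simps)

lemma mf_sym: "mf K i j u = mf K j i u" by (simp add: mf_def ac_simps)

lemma Bmat_sym: assumes "i < lp_order \<beta> + 1" "j < lp_order \<beta> + 1"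
  shows "Bmat K \<beta> n h x $$ (i, j) = Bmat K \<beta> n h x $$ (j, i)"
  using Bmat_idx[OF assms, of K n h x] Bmat_idx[OF assms(2,1), of K n h x] mf_sym[of K i j] by simp




lemma count_interval:
  assumes n: "n \<ge> 1" and L: "L \<ge> 0"
  shows "real (card {l \<in> {1..n}. \<alpha> \<le> xpt n l \<and> xpt n l \<le> \<alpha> + L}) \<le> real n * L + 1"
proof -
  define S where "S = {l \<in> {1..n}. \<alpha> \<le> xpt n l \<and> xpt n l \<le> \<alpha> + L}"
  have fin: "finite S" by (simp add: S_def)
  show ?thesis
  proof (cases "S = {}")
    case True then show ?thesis using L unfolding S_def[symmetric] by simp
  next
    case False
    define lo where "lo = Min S"
    define hi where "hi = Max S"
    have loS: "lo \<in> S" using fin False by (simp add: lo_def)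
    have hiS: "hi \<in> S" using fin False by (simp add: hi_def)
    have sub: "S \<subseteq> {lo..hi}" using fin by (auto simp: lo_def hi_def)
    have "card S \<le> card {lo..hi}" by (rule card_mono) (use sub in auto)
    then have c: "real (card S) \<le> real hi + 1 - real lo" using loS hiS sub by auto
    have npos: "real n > 0" using n by simp
    have "xpt n hi \<le> \<alpha> + L" "\<alpha> \<le> xpt n lo" using loS hiS by (auto simp: S_def)
    then have "real hi / real n - real lo / real n \<le> L" by (simp add: xpt_def)
    then have "(real hi - real lo) / real n \<le> L" by (simp add: diff_divide_distrib)
    then have "real hi - real lo \<le> L * real n" using npos by (simp add: divide_le_eq)
    then show ?thesis using c unfolding S_def[symmetric] by (simp add: mult.commute)
  qed
qed

lemma sum_active:
  fixes f :: "nat \<Rightarrow> real"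
  assumes fin: "finite I" and z: "\<forall>l\<in>I. \<not> P l \<longrightarrow> f l = 0"
    and b: "\<forall>l\<in>I. P l \<longrightarrow> f l \<le> M"
  shows "(\<Sum>l\<in>I. f l) \<le> real (card {l \<in> I. P l}) * M"
proof -
  have "(\<Sum>l\<in>I. f l) = (\<Sum>l\<in>{l \<in> I. P l}. f l)"
    using z fin by (intro sum.mono_neutral_right) auto
  also have "\<dots> \<le> real (card {l \<in> I. P l}) * M"
    using b by (intro sum_bounded_above) auto
  finally show ?thesis .
qed




lemma L2_add_vec:
  fixes v1 v2 :: "real vec"
  assumes "v1 \<in> carrier_vec D" "v2 \<in> carrier_vec D"
  shows "L2_set (\<lambda>i. (v1 + v2) $ i) {..<D} \<le> L2_set (\<lambda>i. v1 $ i) {..<D} + L2_set (\<lambda>i. v2 $ i) {..<D}"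
proof -
  have "L2_set (\<lambda>i. (v1 + v2) $ i) {..<D} = L2_set (\<lambda>i. v1 $ i + v2 $ i) {..<D}"
    using assms by (intro L2_set_cong) auto
  also have "\<dots> \<le> L2_set (\<lambda>i. v1 $ i) {..<D} + L2_set (\<lambda>i. v2 $ i) {..<D}"
    by (rule L2_set_triangle_ineq)
  finally show ?thesis .
qed

lemma L2_minus_vec:
  fixes v1 v2 :: "real vec"
  assumes "v1 \<in> carrier_vec D" "v2 \<in> carrier_vec D"
  shows "L2_set (\<lambda>i. (v1 - v2) $ i) {..<D} = L2_set (\<lambda>i. v1 $ i - v2 $ i) {..<D}"
  using assms by (intro L2_set_cong) auto

lemma diff_identity:
  fixes P Q X Y :: "real mat"
  assumes P: "P \<in> carrier_mat D D" and Q: "Q \<in> carrier_mat D D"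
    and X: "X \<in> carrier_mat D D" and Y: "Y \<in> carrier_mat D D"
    and ga: "ga \<in> carrier_vec D" and gb: "gb \<in> carrier_vec D"
    and PX: "P * X = 1\<^sub>m D" and YQ: "Y * Q = 1\<^sub>m D"
  shows "P *\<^sub>v ga - Q *\<^sub>v gb = P *\<^sub>v ((ga - gb) + (Y - X) *\<^sub>v (Q *\<^sub>v gb))"
proof -
  define w where "w = Q *\<^sub>v gb"
  have w: "w \<in> carrier_vec D" using Q gb by (simp add: w_def)
  define z where "z = X *\<^sub>v w"
  have z: "z \<in> carrier_vec D" using X w by (simp add: z_def)
  have s1: "(Y - X) *\<^sub>v w = Y *\<^sub>v w - z" unfolding z_def
    using Y X w by (simp add: minus_mult_distrib_mat_vec)
  have s2: "Y *\<^sub>v w = gb" unfolding w_def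
    using Y Q gb by (simp add: assoc_mult_mat_vec[symmetric] YQ)
  have s3: "P *\<^sub>v z = w" unfolding z_def
    using P X w by (simp add: assoc_mult_mat_vec[symmetric] PX)
  have s4: "(ga - gb) + (gb - z) = ga - z"
    by (rule eq_vecI) (use ga gb z in auto)
  have "P *\<^sub>v ((ga - gb) + (Y - X) *\<^sub>v (Q *\<^sub>v gb)) = P *\<^sub>v (ga - z)"
    using s1 s2 s4 by (simp add: w_def[symmetric])
  also have "\<dots> = P *\<^sub>v ga - P *\<^sub>v z" using P ga z by (simp add: mult_minus_distrib_mat_vec)
  also have "\<dots> = P *\<^sub>v ga - Q *\<^sub>v gb" using s3 by (simp add: w_def)
  finally show ?thesis by simp
qed

lemma e1_sp: assumes "z \<in> carrier_vec (lp_order \<beta> + 1)" shows "Uvec \<beta> 0 \<bullet> z = z $ 0"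
proof -
  have "Uvec \<beta> 0 \<bullet> z = (\<Sum>i<lp_order \<beta> + 1. Uvec \<beta> 0 $ i * z $ i)"
    by (rule sp_sum[OF Uvec_carrier assms])
  also have "\<dots> = (\<Sum>i<lp_order \<beta> + 1. (if i = 0 then z $ 0 else 0))"
    by (intro sum.cong refl) (simp add: Uvec_idx)
  also have "\<dots> = z $ 0" by simp
  finally show ?thesis .
qed

lemma W_repr:
  assumes Ai: "Ai \<in> carrier_mat (lp_order \<beta> + 1) (lp_order \<beta> + 1)"
    and inv: "mat_inverse (Bmat K \<beta> n h x) = Some Ai"
  shows "Wnk K \<beta> n h k x = (1 / (real n * h)) * (Ai *\<^sub>v gv K \<beta> ((xpt n k - x) / h)) $ 0"
proof -
  define u where "u = (xpt n k - x) / h"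
  have "Uvec \<beta> 0 \<bullet> (Ai *\<^sub>v Uvec \<beta> u) = (Ai *\<^sub>v Uvec \<beta> u) $ 0"
    using Ai Uvec_carrier by (intro e1_sp) simp
  also have "\<dots> = (\<Sum>j<lp_order \<beta> + 1. Ai $$ (0, j) * (u ^ j / fact j))"
    using mv_idx[OF Ai Uvec_carrier, of 0] by (simp add: Uvec_idx)
  finally have "Uvec \<beta> 0 \<bullet> (Ai *\<^sub>v Uvec \<beta> u) * K u = (\<Sum>j<lp_order \<beta> + 1. Ai $$ (0, j) * (u ^ j / fact j)) * K u"
    by simp
  also have "\<dots> = (\<Sum>j<lp_order \<beta> + 1. Ai $$ (0, j) * (K u * (u ^ j / fact j)))"
    unfolding sum_distrib_right by (rule sum.cong) (simp_all add: mult_ac)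
  also have "\<dots> = (Ai *\<^sub>v gv K \<beta> u) $ 0"
    using mv_idx[OF Ai gv_carrier, of 0] by (simp add: gv_idx)
  finally show ?thesis unfolding Wnk_def inv u_def by simp
qed




lemma arith_key:
  fixes \<rho> A X :: real
  assumes "0 \<le> \<rho>" "\<rho> \<le> 17/4" "0 \<le> A" "A \<le> 4 * X"
  shows "\<rho> * (A + \<rho> * X)\<^sup>2 \<le> 4 * (A + 8 * X)\<^sup>2"
proof -
  have X0: "X \<ge> 0" using assms by linarith
  have "A + \<rho> * X \<le> A + 17/4 * X" using assms X0 by (intro add_left_mono mult_right_mono) auto
  also have "\<dots> \<le> 19/20 * (A + 8 * X)"
  proof -
    have "19/20 * (A + 8 * X) = 19/20 * A + 152/20 * X" by (simp add: algebra_simps)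
    then show ?thesis using assms X0 by linarith
  qed
  finally have h1: "A + \<rho> * X \<le> 19/20 * (A + 8 * X)" .
  have h0: "0 \<le> A + \<rho> * X" using assms X0 by simp
  have "(A + \<rho> * X)\<^sup>2 \<le> (19/20 * (A + 8 * X))\<^sup>2" by (rule power_mono[OF h1 h0])
  then have "\<rho> * (A + \<rho> * X)\<^sup>2 \<le> 17/4 * (19/20 * (A + 8 * X))\<^sup>2"
    using assms by (intro mult_mono) auto
  also have "\<dots> \<le> 4 * (A + 8 * X)\<^sup>2"
  proof -
    have e: "(19/20 * (A + 8 * X))\<^sup>2 = (19/20)\<^sup>2 * (A + 8 * X)\<^sup>2" by (rule power_mult_distrib)
    have "(19/20::real)\<^sup>2 = 361/400" by (simp add: power2_eq_square)
    with e have "(19/20 * (A + 8 * X))\<^sup>2 = 361/400 * (A + 8 * X)\<^sup>2" by simp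
    moreover have "(A + 8 * X)\<^sup>2 \<ge> 0" by simp
    ultimately show ?thesis by linarith
  qed
  finally show ?thesis .
qed

lemma part1:
  fixes K :: "real \<Rightarrow> real" and \<beta> h lam0 Kmax LK a b :: real and n :: nat
  assumes beta_pos: "\<beta> > 0"
    and K_nonneg: "\<forall>u. K u \<ge> 0"
    and K_supp: "\<forall>u. \<bar>u\<bar> > 1 \<longrightarrow> K u = 0"
    and Kmax_pos: "Kmax > 0"
    and K_upper: "\<forall>u. K u \<le> Kmax"
    and K_lip: "lipschitz_on LK UNIV K"
    and n_pos: "n \<ge> 1"
    and h_ge: "h \<ge> 1 / (2 * real n)"
    and lam_pos: "lam0 > 0"
    and eig: "\<forall>x \<in> {0..1}. \<forall>\<mu>. eigenvalue (Bmat K \<beta> n h x) \<mu> \<longrightarrow> \<mu> \<ge> lam0"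
    and ab: "a \<in> {0..1}" "b \<in> {0..1}"
  shows "(\<Sum>k = 1..n. (Wnk K \<beta> n h k a - Wnk K \<beta> n h k b)\<^sup>2)
           \<le> Wconst \<beta> LK Kmax lam0 / (real n * h ^ 3)
              * (min (8 * L2const \<beta> LK Kmax / lam0 * \<bar>a - b\<bar>) h)\<^sup>2"
proof -
  define D where "D = lp_order \<beta> + 1"
  define c where "c = 1 / (real n * h)"
  define d where "d = \<bar>a - b\<bar>"
  define s where "s = sqrt (exp (1::real))"
  have s2: "s\<^sup>2 = exp 1" by (simp add: s_def)
  have s0: "s \<ge> 0" by (simp add: s_def)
  have s2le: "s\<^sup>2 \<le> 3" using s2 exp_le by simp
  have nR: "real n \<ge> 1" using n_pos by simp
  have hpos: "h > 0"
  proof -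
    have "1 / (2 * real n) > 0" using nR by simp
    then show ?thesis using h_ge by linarith
  qed
  have nh: "1 \<le> 2 * (real n * h)" using h_ge nR by (simp add: field_simps)
  have nhpos: "real n * h > 0" using hpos nR by simp
  have c0: "c > 0" unfolding c_def using nhpos by (intro divide_pos_pos) auto
  have cnh: "c * (real n * h) = 1" using nR hpos by (simp add: c_def)
  have Klip: "\<forall>u v. \<bar>K u - K v\<bar> \<le> LK * \<bar>u - v\<bar>"
    using K_lip by (auto dest!: lipschitz_onD simp: dist_real_def)
  have LK0: "LK \<ge> 0" using K_lip lipschitz_on_nonneg by blast
  have Kmax0: "Kmax \<ge> 0" using Kmax_pos by simp
  have ceil1: "\<lceil>\<beta>\<rceil> \<ge> 1" using beta_pos by (simp add: zero_less_ceiling[symmetric] del: zero_less_ceiling)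
  have DD: "real D = real_of_int \<lceil>\<beta>\<rceil>" unfolding D_def lp_order_def using ceil1 by simp
  have D1: "D \<ge> 1" by (simp add: D_def)
  have L2c: "L2const \<beta> LK Kmax = real D * (2 * Kmax + LK)" by (simp add: L2const_def DD algebra_simps)
  define L2 where "L2 = L2const \<beta> LK Kmax"
  have L2ge: "L2 \<ge> 2 * Kmax + LK" unfolding L2_def L2c using D1 Kmax0 LK0
  proof -
    have "1 * (2 * Kmax + LK) \<le> real D * (2 * Kmax + LK)"
      using D1 Kmax0 LK0 by (intro mult_right_mono) auto
    then show "2 * Kmax + LK \<le> real D * (2 * Kmax + LK)" by simp
  qed
  have L2pos: "L2 > 0" using L2ge Kmax_pos LK0 by simp
  define L1 where "L1 = L1const LK Kmax"
  have L1eq: "L1 = s * (LK + Kmax)" by (simp add: L1_def L1const_def s_def)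

  have Bc: "\<And>x. Bmat K \<beta> n h x \<in> carrier_mat D D" unfolding D_def by (rule Bmat_carrier)
  have Bs: "\<And>x. \<forall>i<D. \<forall>j<D. Bmat K \<beta> n h x $$ (i, j) = Bmat K \<beta> n h x $$ (j, i)"
    unfolding D_def using Bmat_sym by blast
  have eiga: "\<forall>\<mu>. eigenvalue (Bmat K \<beta> n h a) \<mu> \<longrightarrow> \<mu> \<ge> lam0" using eig ab by blast
  have eigb: "\<forall>\<mu>. eigenvalue (Bmat K \<beta> n h b) \<mu> \<longrightarrow> \<mu> \<ge> lam0" using eig ab by blast
  obtain Pa where Pa: "mat_inverse (Bmat K \<beta> n h a) = Some Pa" "Bmat K \<beta> n h a * Pa = 1\<^sub>m D"
      "Pa * Bmat K \<beta> n h a = 1\<^sub>m D" "Pa \<in> carrier_mat D D"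
    using inverse_exists[OF Bc eiga lam_pos] by blast
  obtain Pb where Pb: "mat_inverse (Bmat K \<beta> n h b) = Some Pb" "Bmat K \<beta> n h b * Pb = 1\<^sub>m D"
      "Pb * Bmat K \<beta> n h b = 1\<^sub>m D" "Pb \<in> carrier_mat D D"
    using inverse_exists[OF Bc eigb lam_pos] by blast
  have Pa_bd: "\<And>y. y \<in> carrier_vec D \<Longrightarrow> L2_set (\<lambda>i. (Pa *\<^sub>v y) $ i) {..<D} \<le> L2_set (\<lambda>i. y $ i) {..<D} / lam0"
    by (rule inverse_bound[OF Bc Bs eiga lam_pos Pa(4) Pa(2)])
  have Pb_bd: "\<And>y. y \<in> carrier_vec D \<Longrightarrow> L2_set (\<lambda>i. (Pb *\<^sub>v y) $ i) {..<D} \<le> L2_set (\<lambda>i. y $ i) {..<D} / lam0"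
    by (rule inverse_bound[OF Bc Bs eigb lam_pos Pb(4) Pb(2)])
  define ga where "ga = (\<lambda>k. gv K \<beta> ((xpt n k - a) / h))"
  define gb where "gb = (\<lambda>k. gv K \<beta> ((xpt n k - b) / h))"
  have gac: "\<And>k. ga k \<in> carrier_vec D" unfolding ga_def D_def by (rule gv_carrier)
  have gbc: "\<And>k. gb k \<in> carrier_vec D" unfolding gb_def D_def by (rule gv_carrier)
  have Wa: "\<And>k. Wnk K \<beta> n h k a = c * (Pa *\<^sub>v ga k) $ 0"
    unfolding c_def ga_def by (rule W_repr[OF Pa(4)[unfolded D_def] Pa(1)])
  have Wb: "\<And>k. Wnk K \<beta> n h k b = c * (Pb *\<^sub>v gb k) $ 0"
    unfolding c_def gb_def by (rule W_repr[OF Pb(4)[unfolded D_def] Pb(1)])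
  have gnorm: "\<And>u. L2_set (\<lambda>i. gv K \<beta> u $ i) {..<D} \<le> s * Kmax"
    unfolding D_def s_def by (rule gv_norm[OF K_supp K_nonneg K_upper])
  have Pga: "\<bar>(Pa *\<^sub>v ga k) $ 0\<bar> \<le> s * Kmax / lam0" for k
  proof -
    have "\<bar>(Pa *\<^sub>v ga k) $ 0\<bar> \<le> L2_set (\<lambda>i. (Pa *\<^sub>v ga k) $ i) {..<D}"
      using D1 by (intro abs_le_L2) auto
    also have "\<dots> \<le> L2_set (\<lambda>i. ga k $ i) {..<D} / lam0" by (rule Pa_bd[OF gac])
    also have "\<dots> \<le> s * Kmax / lam0" using gnorm lam_pos by (simp add: ga_def divide_right_mono)
    finally show ?thesis .
  qed
  have Pgb: "\<bar>(Pb *\<^sub>v gb k) $ 0\<bar> \<le> s * Kmax / lam0" for k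
  proof -
    have "\<bar>(Pb *\<^sub>v gb k) $ 0\<bar> \<le> L2_set (\<lambda>i. (Pb *\<^sub>v gb k) $ i) {..<D}"
      using D1 by (intro abs_le_L2) auto
    also have "\<dots> \<le> L2_set (\<lambda>i. gb k $ i) {..<D} / lam0" by (rule Pb_bd[OF gbc])
    also have "\<dots> \<le> s * Kmax / lam0" using gnorm lam_pos by (simp add: gb_def divide_right_mono)
    finally show ?thesis .
  qed
  have out_u: "\<bar>(xpt n k - x) / h\<bar> > 1" if "\<bar>xpt n k - x\<bar> > h" for k x
    using that hpos by (simp add: abs_divide less_divide_eq)
  have in_u: "\<bar>(xpt n k - x) / h\<bar> \<le> 1" if "\<bar>xpt n k - x\<bar> \<le> h" for k x
    using that hpos by (simp add: abs_divide divide_le_eq)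
  have gzero: "gv K \<beta> u $ i = 0" if "\<bar>u\<bar> > 1" "i < D" for u i
    using that K_supp by (simp add: gv_idx D_def)
  have Pg0: "(P *\<^sub>v gv K \<beta> u) $ 0 = 0" if "P \<in> carrier_mat D D" "\<bar>u\<bar> > 1" for P u
  proof -
    have "(P *\<^sub>v gv K \<beta> u) $ 0 = (\<Sum>j<D. P $$ (0, j) * gv K \<beta> u $ j)"
      using mv_idx[OF that(1), of "gv K \<beta> u" 0] D1 gv_carrier[of K \<beta> u] by (simp add: D_def)
    also have "\<dots> = 0" using gzero[OF that(2)] by simp
    finally show ?thesis .
  qed

  have cnt1: "real (card {l \<in> {1..n}. \<bar>xpt n l - x\<bar> \<le> h}) \<le> 2 * (real n * h) + 1" for x
  proof -
    have "card {l \<in> {1..n}. \<bar>xpt n l - x\<bar> \<le> h} \<le> card {l \<in> {1..n}. x - h \<le> xpt n l \<and> xpt n l \<le> (x - h) + 2 * h}"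
      by (intro card_mono) auto
    then have "real (card {l \<in> {1..n}. \<bar>xpt n l - x\<bar> \<le> h}) \<le> real (card {l \<in> {1..n}. x - h \<le> xpt n l \<and> xpt n l \<le> (x - h) + 2 * h})"
      by simp
    also have "\<dots> \<le> real n * (2 * h) + 1" using hpos by (intro count_interval n_pos) auto
    finally show ?thesis by simp
  qed
  have c2: "c \<le> 2" using nh nhpos unfolding c_def by (simp add: divide_le_eq)
  have lam_le: "lam0 \<le> 4 * Kmax"
  proof -
    define e1 where "e1 = Uvec \<beta> 0"
    have e1c: "e1 \<in> carrier_vec D" unfolding e1_def D_def by (rule Uvec_carrier)
    have e1i: "e1 $ i = (if i = 0 then 1 else 0)" if "i < D" for i
      using that by (simp add: e1_def D_def Uvec_idx)
    have "(\<Sum>i<D. (e1 $ i)\<^sup>2) = (\<Sum>i<D. (if i = 0 then 1 else 0))"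
      by (intro sum.cong refl) (simp add: e1i)
    also have "\<dots> = 1" using D1 by simp
    finally have n1: "(\<Sum>i<D. (e1 $ i)\<^sup>2) = 1" .
    have "lam0 * (\<Sum>i<D. (e1 $ i)\<^sup>2) \<le> e1 \<bullet> (Bmat K \<beta> n h a *\<^sub>v e1)"
      by (rule quad_form_bound[OF Bc Bs eiga e1c])
    also have "e1 \<bullet> (Bmat K \<beta> n h a *\<^sub>v e1) = (Bmat K \<beta> n h a *\<^sub>v e1) $ 0"
    proof -
      have Be1: "Bmat K \<beta> n h a *\<^sub>v e1 \<in> carrier_vec D" using Bc[of a] e1c by simp
      show ?thesis using Be1 unfolding e1_def D_def by (rule e1_sp)
    qed
    also have "\<dots> = (\<Sum>j<D. Bmat K \<beta> n h a $$ (0, j) * e1 $ j)"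
      using mv_idx[OF Bc e1c, of 0] D1 by simp
    also have "\<dots> = (\<Sum>j<D. (if j = 0 then Bmat K \<beta> n h a $$ (0, 0) else 0))"
      by (intro sum.cong refl) (simp add: e1i)
    also have "\<dots> = Bmat K \<beta> n h a $$ (0, 0)" using D1 by simp
    also have "\<dots> = c * (\<Sum>l = 1..n. K ((xpt n l - a) / h))"
      using Bmat_idx[of 0 \<beta> 0 K n h a] by (simp add: c_def mf_def)
    also have "(\<Sum>l = 1..n. K ((xpt n l - a) / h)) \<le> real (card {l \<in> {1..n}. \<bar>xpt n l - a\<bar> \<le> h}) * Kmax"
      by (intro sum_active) (use K_supp K_upper out_u in auto)
    also have "\<dots> \<le> (2 * (real n * h) + 1) * Kmax" using cnt1 Kmax0 by (intro mult_right_mono) auto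
    finally have "lam0 \<le> c * ((2 * (real n * h) + 1) * Kmax)" using n1 c0 by (simp add: mult_left_mono)
    also have "\<dots> = (2 * (c * (real n * h)) + c) * Kmax" by (simp add: algebra_simps)
    also have "\<dots> = (2 + c) * Kmax" using cnh by simp
    also have "\<dots> \<le> 4 * Kmax" using c2 Kmax0 by (intro mult_right_mono) auto
    finally show ?thesis .
  qed
  have sumW: "(\<Sum>k = 1..n. (c * (P *\<^sub>v gv K \<beta> ((xpt n k - x) / h)) $ 0)\<^sup>2) \<le> (2 * (real n * h) + 1) * (c * (s * Kmax / lam0))\<^sup>2"
    if P: "P \<in> carrier_mat D D" and Pbd: "\<And>k. \<bar>(P *\<^sub>v gv K \<beta> ((xpt n k - x) / h)) $ 0\<bar> \<le> s * Kmax / lam0" for P x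
  proof -
    have "(\<Sum>k = 1..n. (c * (P *\<^sub>v gv K \<beta> ((xpt n k - x) / h)) $ 0)\<^sup>2)
        \<le> real (card {l \<in> {1..n}. \<bar>xpt n l - x\<bar> \<le> h}) * (c * (s * Kmax / lam0))\<^sup>2"
    proof (intro sum_active ballI impI)
      fix k assume "\<not> \<bar>xpt n k - x\<bar> \<le> h"
      then have "\<bar>(xpt n k - x) / h\<bar> > 1" using out_u by simp
      then show "(c * (P *\<^sub>v gv K \<beta> ((xpt n k - x) / h)) $ 0)\<^sup>2 = 0" using Pg0[OF P] by simp
    next
      fix k
      have "\<bar>c * (P *\<^sub>v gv K \<beta> ((xpt n k - x) / h)) $ 0\<bar> \<le> c * (s * Kmax / lam0)"
      proof -
        have "c * \<bar>(P *\<^sub>v gv K \<beta> ((xpt n k - x) / h)) $ 0\<bar> \<le> c * (s * Kmax / lam0)"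
          using Pbd[of k] c0 by (intro mult_left_mono) auto
        then show ?thesis using c0 by (simp add: abs_mult)
      qed
      then show "(c * (P *\<^sub>v gv K \<beta> ((xpt n k - x) / h)) $ 0)\<^sup>2 \<le> (c * (s * Kmax / lam0))\<^sup>2"
        by (metis abs_le_square_iff abs_of_nonneg abs_ge_zero order_trans power2_abs)
    qed simp
    also have "\<dots> \<le> (2 * (real n * h) + 1) * (c * (s * Kmax / lam0))\<^sup>2"
      using cnt1[of x] by (intro mult_right_mono) auto
    finally show ?thesis .
  qed
  have sumWa: "(\<Sum>k = 1..n. (Wnk K \<beta> n h k a)\<^sup>2) \<le> (2 * (real n * h) + 1) * (c * (s * Kmax / lam0))\<^sup>2"
    unfolding Wa ga_def by (rule sumW[OF Pa(4)]) (use Pga in \<open>simp add: ga_def\<close>)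
  have sumWb: "(\<Sum>k = 1..n. (Wnk K \<beta> n h k b)\<^sup>2) \<le> (2 * (real n * h) + 1) * (c * (s * Kmax / lam0))\<^sup>2"
    unfolding Wb gb_def by (rule sumW[OF Pb(4)]) (use Pgb in \<open>simp add: gb_def\<close>)

  define r where "r = 8 * L2 / lam0 * d"
  define W where "W = Wconst \<beta> LK Kmax lam0"
  have Wge1: "W \<ge> 4 * (8 * Kmax / lam0)\<^sup>2" by (simp add: W_def Wconst_def Cstar_def)
  have Wge2: "W \<ge> 4 * (L1 / (8 * L2) + s * Kmax / lam0)\<^sup>2"
    by (simp add: W_def Wconst_def Ctilde_def L1_def L2_def s_def)
  have goal_eq: "Wconst \<beta> LK Kmax lam0 / (real n * h ^ 3) * (min (8 * L2const \<beta> LK Kmax / lam0 * \<bar>a - b\<bar>) h)\<^sup>2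
      = W * c * (min r h / h)\<^sup>2"
    using hpos nR by (simp add: W_def r_def L2_def d_def c_def power2_eq_square power3_eq_cube field_simps)
  define S where "S = (\<Sum>k = 1..n. (Wnk K \<beta> n h k a - Wnk K \<beta> n h k b)\<^sup>2)"
  have "S \<le> W * c * (min r h / h)\<^sup>2"
  proof (cases "h \<le> r")
    case True
    then have mh: "min r h / h = 1" using hpos by simp
    have "S \<le> (\<Sum>k = 1..n. 2 * (Wnk K \<beta> n h k a)\<^sup>2 + 2 * (Wnk K \<beta> n h k b)\<^sup>2)"
      unfolding S_def
    proof (intro sum_mono)
      fix k
      have "0 \<le> (Wnk K \<beta> n h k a + Wnk K \<beta> n h k b)\<^sup>2" by simp
      then show "(Wnk K \<beta> n h k a - Wnk K \<beta> n h k b)\<^sup>2 \<le> 2 * (Wnk K \<beta> n h k a)\<^sup>2 + 2 * (Wnk K \<beta> n h k b)\<^sup>2"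
        by (simp add: power2_eq_square algebra_simps)
    qed
    also have "\<dots> = 2 * (\<Sum>k = 1..n. (Wnk K \<beta> n h k a)\<^sup>2) + 2 * (\<Sum>k = 1..n. (Wnk K \<beta> n h k b)\<^sup>2)"
      by (simp add: sum.distrib sum_distrib_left)
    also have "\<dots> \<le> 4 * ((2 * (real n * h) + 1) * (c * (s * Kmax / lam0))\<^sup>2)"
      using sumWa sumWb by simp
    also have "\<dots> \<le> 4 * ((4 * (real n * h)) * (c * (s * Kmax / lam0))\<^sup>2)"
      using nh by (intro mult_left_mono mult_right_mono) (auto simp: mult.commute)
    also have "\<dots> = 16 * (c * (real n * h)) * c * s\<^sup>2 * (Kmax / lam0)\<^sup>2"
      by (simp add: power2_eq_square)
    also have "\<dots> = 16 * c * s\<^sup>2 * (Kmax / lam0)\<^sup>2" using cnh by simp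
    also have "\<dots> \<le> 16 * c * 3 * (Kmax / lam0)\<^sup>2"
      using s2le c0 by (intro mult_right_mono mult_left_mono) auto
    also have "\<dots> \<le> c * (4 * (8 * Kmax / lam0)\<^sup>2)"
    proof -
      have q0: "0 \<le> c * (Kmax / lam0)\<^sup>2" using c0 by simp
      have e8: "(8 * Kmax / lam0)\<^sup>2 = 64 * (Kmax / lam0)\<^sup>2" by (simp add: power2_eq_square)
      have "16 * c * 3 * (Kmax / lam0)\<^sup>2 = 48 * (c * (Kmax / lam0)\<^sup>2)" by simp
      moreover have "c * (4 * (8 * Kmax / lam0)\<^sup>2) = 256 * (c * (Kmax / lam0)\<^sup>2)" unfolding e8 by simp
      ultimately show ?thesis using q0 by linarith
    qed
    also have "\<dots> \<le> c * W" using Wge1 c0 by (intro mult_left_mono) auto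
    finally show ?thesis using mh by (simp add: mult.commute)
  next
    case False
    then have rh: "r < h" by simp
    define q where "q = d / h"
    have q0: "q \<ge> 0" using hpos by (simp add: q_def d_def)
    have mr: "min r h / h = 8 * L2 / lam0 * q" using rh by (simp add: r_def q_def)
    define act where "act = (\<lambda>l. \<bar>xpt n l - a\<bar> \<le> h \<or> \<bar>xpt n l - b\<bar> \<le> h)"
    define N where "N = real (card {l \<in> {1..n}. act l})"
    have N0: "N \<ge> 0" by (simp add: N_def)
    have cntN: "N \<le> real n * (2 * h + d) + 1"
    proof -
      have "card {l \<in> {1..n}. act l} \<le> card {l \<in> {1..n}. min a b - h \<le> xpt n l \<and> xpt n l \<le> (min a b - h) + (2 * h + d)}"
        by (intro card_mono) (auto simp: act_def d_def)
      then have "N \<le> real (card {l \<in> {1..n}. min a b - h \<le> xpt n l \<and> xpt n l \<le> (min a b - h) + (2 * h + d)})"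
        by (simp add: N_def)
      also have "\<dots> \<le> real n * (2 * h + d) + 1" using hpos by (intro count_interval n_pos) (auto simp: d_def)
      finally show ?thesis .
    qed
    have dh: "d \<le> h / 4"
    proof -
      have "8 * L2 * d < h * lam0" using rh lam_pos by (simp add: r_def field_simps)
      also have "\<dots> \<le> h * (4 * Kmax)" using hpos lam_le by (intro mult_left_mono) auto
      also have "\<dots> \<le> h * (2 * L2)" using hpos L2ge LK0 by (intro mult_left_mono) auto
      finally have "8 * L2 * d < 2 * L2 * h" by (simp add: mult_ac)
      then have "L2 * (4 * d) < L2 * h" by (simp add: algebra_simps)
      then have "4 * d < h" using L2pos by simp
      then show ?thesis by simp
    qed
    define \<rho> where "\<rho> = c * N"
    have \<rho>0: "\<rho> \<ge> 0" using c0 N0 by (simp add: \<rho>_def)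
    have \<rho>le: "\<rho> \<le> 17/4"
    proof -
      have "N \<le> real n * (2 * h + h / 4) + 2 * (real n * h)"
        using cntN dh nh nR by (smt (verit) mult_left_mono of_nat_0_le_iff)
      also have "\<dots> = 17/4 * (real n * h)" by (simp add: algebra_simps)
      finally have "c * N \<le> c * (17/4 * (real n * h))" using c0 by (intro mult_left_mono) auto
      also have "\<dots> = 17/4" using cnh by simp
      finally show ?thesis by (simp add: \<rho>_def)
    qed
    define EB where "EB = c * N * (2 * Kmax + LK) * q"
    have entry: "\<bar>(Bmat K \<beta> n h b - Bmat K \<beta> n h a) $$ (i, j)\<bar> \<le> EB" if ij: "i < D" "j < D" for i j
    proof -
      have "(Bmat K \<beta> n h b - Bmat K \<beta> n h a) $$ (i, j) = Bmat K \<beta> n h b $$ (i, j) - Bmat K \<beta> n h a $$ (i, j)"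
        using Bc[of a] Bc[of b] ij by simp
      also have "\<dots> = c * (\<Sum>l = 1..n. mf K i j ((xpt n l - b) / h) - mf K i j ((xpt n l - a) / h))"
        using Bmat_idx[of i \<beta> j K n h b] Bmat_idx[of i \<beta> j K n h a] ij
        by (simp add: D_def c_def sum_subtractf right_diff_distrib)
      finally have eq: "(Bmat K \<beta> n h b - Bmat K \<beta> n h a) $$ (i, j) = c * (\<Sum>l = 1..n. mf K i j ((xpt n l - b) / h) - mf K i j ((xpt n l - a) / h))" .
      have "\<bar>\<Sum>l = 1..n. mf K i j ((xpt n l - b) / h) - mf K i j ((xpt n l - a) / h)\<bar>
          \<le> (\<Sum>l = 1..n. \<bar>mf K i j ((xpt n l - b) / h) - mf K i j ((xpt n l - a) / h)\<bar>)"
        by (rule sum_abs)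
      also have "\<dots> \<le> N * ((2 * Kmax + LK) * q)"
        unfolding N_def
      proof (intro sum_active ballI impI)
        fix l assume "\<not> act l"
        then have "\<bar>(xpt n l - a) / h\<bar> > 1" "\<bar>(xpt n l - b) / h\<bar> > 1" using out_u by (auto simp: act_def)
        then show "\<bar>mf K i j ((xpt n l - b) / h) - mf K i j ((xpt n l - a) / h)\<bar> = 0"
          using mf_zero[OF K_supp] by simp
      next
        fix l
        have "\<bar>(xpt n l - b) / h - (xpt n l - a) / h\<bar> = q"
          using hpos by (simp add: q_def d_def diff_divide_distrib[symmetric] abs_minus_commute abs_divide)
        then show "\<bar>mf K i j ((xpt n l - b) / h) - mf K i j ((xpt n l - a) / h)\<bar> \<le> (2 * Kmax + LK) * q"
          using mf_lip[OF K_supp K_nonneg K_upper Klip LK0, of i j "(xpt n l - b) / h" "(xpt n l - a) / h"] by simp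
      qed simp
      finally have "c * \<bar>\<Sum>l = 1..n. mf K i j ((xpt n l - b) / h) - mf K i j ((xpt n l - a) / h)\<bar> \<le> c * (N * ((2 * Kmax + LK) * q))"
        using c0 by (intro mult_left_mono) auto
      then show ?thesis unfolding eq EB_def using c0 by (simp add: abs_mult mult_ac)
    qed
    define T where "T = c / lam0 * (L1 * q + real D * EB * (s * Kmax / lam0))"
    have perterm: "\<bar>Wnk K \<beta> n h k a - Wnk K \<beta> n h k b\<bar> \<le> T" for k
    proof -
      define w where "w = Pb *\<^sub>v gb k"
      have wc: "w \<in> carrier_vec D" using Pb(4) gbc by (simp add: w_def)
      have dBc: "Bmat K \<beta> n h b - Bmat K \<beta> n h a \<in> carrier_mat D D" by (rule minus_carrier_mat[OF Bc])
      define V where "V = (ga k - gb k) + (Bmat K \<beta> n h b - Bmat K \<beta> n h a) *\<^sub>v w"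
      have gdc: "ga k - gb k \<in> carrier_vec D" using gac gbc by simp
      have Mwc: "(Bmat K \<beta> n h b - Bmat K \<beta> n h a) *\<^sub>v w \<in> carrier_vec D" using dBc wc by simp
      have Vc: "V \<in> carrier_vec D" unfolding V_def using gdc Mwc by simp
      have ident: "Pa *\<^sub>v ga k - Pb *\<^sub>v gb k = Pa *\<^sub>v V"
        unfolding V_def w_def by (rule diff_identity[OF Pa(4) Pb(4) Bc Bc gac gbc Pa(3) Pb(2)])
      have "Wnk K \<beta> n h k a - Wnk K \<beta> n h k b = c * ((Pa *\<^sub>v ga k) $ 0 - (Pb *\<^sub>v gb k) $ 0)"
        by (simp add: Wa Wb right_diff_distrib)
      also have "(Pa *\<^sub>v ga k) $ 0 - (Pb *\<^sub>v gb k) $ 0 = (Pa *\<^sub>v ga k - Pb *\<^sub>v gb k) $ 0"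
        using Pb(4) gbc D1 by simp
      finally have eqW: "Wnk K \<beta> n h k a - Wnk K \<beta> n h k b = c * (Pa *\<^sub>v V) $ 0" unfolding ident .
      have EB0: "EB \<ge> 0" using c0 N0 Kmax0 LK0 q0 by (simp add: EB_def)
      have h1: "L2_set (\<lambda>i. V $ i) {..<D} \<le> L2_set (\<lambda>i. (ga k - gb k) $ i) {..<D} + L2_set (\<lambda>i. ((Bmat K \<beta> n h b - Bmat K \<beta> n h a) *\<^sub>v w) $ i) {..<D}"
        unfolding V_def by (rule L2_add_vec[OF gdc Mwc])
      have h2: "L2_set (\<lambda>i. (ga k - gb k) $ i) {..<D} \<le> L1 * q"
      proof -
        have "L2_set (\<lambda>i. (ga k - gb k) $ i) {..<D} = L2_set (\<lambda>i. ga k $ i - gb k $ i) {..<D}"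
          by (rule L2_minus_vec[OF gac gbc])
        also have "\<dots> \<le> sqrt (exp 1) * (LK + Kmax) * \<bar>(xpt n k - a) / h - (xpt n k - b) / h\<bar>"
          unfolding ga_def gb_def D_def by (rule gv_lip[OF K_supp K_nonneg K_upper Klip LK0])
        also have "\<bar>(xpt n k - a) / h - (xpt n k - b) / h\<bar> = q"
          using hpos by (simp add: q_def d_def diff_divide_distrib[symmetric] abs_divide abs_minus_commute)
        finally show ?thesis by (simp add: L1eq s_def)
      qed
      have h3: "L2_set (\<lambda>i. ((Bmat K \<beta> n h b - Bmat K \<beta> n h a) *\<^sub>v w) $ i) {..<D} \<le> real D * EB * L2_set (\<lambda>i. w $ i) {..<D}"
        by (rule L2_mat_vec[OF dBc wc]) (use entry in auto)
      have h4: "L2_set (\<lambda>i. w $ i) {..<D} \<le> s * Kmax / lam0"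
      proof -
        have "L2_set (\<lambda>i. w $ i) {..<D} \<le> L2_set (\<lambda>i. gb k $ i) {..<D} / lam0" unfolding w_def by (rule Pb_bd[OF gbc])
        also have "\<dots> \<le> s * Kmax / lam0" using gnorm lam_pos by (simp add: gb_def divide_right_mono)
        finally show ?thesis .
      qed
      have h5: "real D * EB * L2_set (\<lambda>i. w $ i) {..<D} \<le> real D * EB * (s * Kmax / lam0)"
        using h4 EB0 by (intro mult_left_mono) auto
      have hV: "L2_set (\<lambda>i. V $ i) {..<D} \<le> L1 * q + real D * EB * (s * Kmax / lam0)"
        using h1 h2 h3 h5 by linarith
      have "\<bar>(Pa *\<^sub>v V) $ 0\<bar> \<le> L2_set (\<lambda>i. (Pa *\<^sub>v V) $ i) {..<D}" using D1 by (intro abs_le_L2) auto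
      also have "\<dots> \<le> L2_set (\<lambda>i. V $ i) {..<D} / lam0" by (rule Pa_bd[OF Vc])
      also have "\<dots> \<le> (L1 * q + real D * EB * (s * Kmax / lam0)) / lam0"
        using hV lam_pos by (simp add: divide_right_mono)
      finally have "c * \<bar>(Pa *\<^sub>v V) $ 0\<bar> \<le> c * ((L1 * q + real D * EB * (s * Kmax / lam0)) / lam0)"
        using c0 by (intro mult_left_mono) auto
      then show ?thesis unfolding eqW T_def using c0 by (simp add: abs_mult)
    qed
    have Wa0: "Wnk K \<beta> n h k a = 0" if "\<bar>xpt n k - a\<bar> > h" for k
      using Pg0[OF Pa(4) out_u[OF that]] by (simp add: Wa ga_def)
    have Wb0: "Wnk K \<beta> n h k b = 0" if "\<bar>xpt n k - b\<bar> > h" for k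
      using Pg0[OF Pb(4) out_u[OF that]] by (simp add: Wb gb_def)
    have T0: "T \<ge> 0" using perterm[of 0] by linarith
    have SN: "S \<le> N * T\<^sup>2"
      unfolding S_def N_def
    proof (intro sum_active ballI impI)
      fix k assume "\<not> act k"
      then show "(Wnk K \<beta> n h k a - Wnk K \<beta> n h k b)\<^sup>2 = 0" using Wa0 Wb0 by (auto simp: act_def)
    next
      fix k
      show "(Wnk K \<beta> n h k a - Wnk K \<beta> n h k b)\<^sup>2 \<le> T\<^sup>2"
        using perterm[of k] T0 by (metis abs_le_square_iff abs_of_nonneg)
    qed simp
    define A where "A = L1 / lam0"
    define X where "X = L2 * s * Kmax / lam0\<^sup>2"
    have A0: "A \<ge> 0" using L1eq s0 LK0 Kmax0 lam_pos by (simp add: A_def)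
    have AX: "A \<le> 4 * X"
    proof -
      have "L1 * lam0 \<le> L1 * (4 * Kmax)" using lam_le L1eq s0 LK0 Kmax0 by (intro mult_left_mono) auto
      also have "\<dots> = s * (LK + Kmax) * (4 * Kmax)" by (simp add: L1eq)
      also have "\<dots> \<le> s * L2 * (4 * Kmax)" using s0 Kmax0 L2ge Kmax0 by (intro mult_right_mono mult_left_mono) auto
      finally have "L1 * lam0 \<le> 4 * (L2 * s * Kmax)" by (simp add: mult_ac)
      then show ?thesis using lam_pos by (simp add: A_def X_def field_simps power2_eq_square)
    qed
    have DEB: "real D * EB = \<rho> * q * L2" by (simp add: EB_def \<rho>_def L2_def L2c mult_ac)
    have Teq: "T = c * q * (A + \<rho> * X)"
      unfolding T_def A_def X_def using DEB lam_pos
      by (simp add: field_simps power2_eq_square)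
    have NT: "N * T\<^sup>2 = c * q\<^sup>2 * (\<rho> * (A + \<rho> * X)\<^sup>2)"
      unfolding Teq \<rho>_def by (simp add: power2_eq_square mult_ac)
    have key: "\<rho> * (A + \<rho> * X)\<^sup>2 \<le> 4 * (A + 8 * X)\<^sup>2" by (rule arith_key[OF \<rho>0 \<rho>le A0 AX])
    have Ct: "(L1 / (8 * L2) + s * Kmax / lam0) * (8 * L2 / lam0) = A + 8 * X"
      unfolding A_def X_def using L2pos lam_pos by (simp add: field_simps power2_eq_square)
    have "4 * (A + 8 * X)\<^sup>2 = 4 * (L1 / (8 * L2) + s * Kmax / lam0)\<^sup>2 * (8 * L2 / lam0)\<^sup>2"
      unfolding Ct[symmetric] power_mult_distrib by (simp only: mult.assoc)
    also have "\<dots> \<le> W * (8 * L2 / lam0)\<^sup>2" using Wge2 by (intro mult_right_mono) auto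
    finally have key2: "\<rho> * (A + \<rho> * X)\<^sup>2 \<le> W * (8 * L2 / lam0)\<^sup>2" using key by linarith
    have cq: "c * q\<^sup>2 \<ge> 0" using c0 by simp
    have "c * q\<^sup>2 * (\<rho> * (A + \<rho> * X)\<^sup>2) \<le> c * q\<^sup>2 * (W * (8 * L2 / lam0)\<^sup>2)"
      using key2 cq by (rule mult_left_mono)
    then have "S \<le> c * q\<^sup>2 * (W * (8 * L2 / lam0)\<^sup>2)" using SN NT by linarith
    also have "\<dots> = W * c * (min r h / h)\<^sup>2" unfolding mr by (simp add: power2_eq_square field_simps)
    finally show ?thesis .
  qed
  then show ?thesis unfolding goal_eq S_def .
qed



lemma (in prob_space) var_lin:
  fixes \<epsilon> :: "nat \<Rightarrow> 'a \<Rightarrow> real"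
  assumes fin: "finite I" and \<sigma>: "\<sigma> > 0" and ind: "indep_vars (\<lambda>_. borel) \<epsilon> I"
    and dist: "\<forall>k\<in>I. distributed M lborel (\<epsilon> k) (normal_density 0 \<sigma>)"
  shows "variance (\<lambda>\<omega>. \<Sum>k\<in>I. a k * \<epsilon> k \<omega>) = \<sigma>\<^sup>2 * (\<Sum>k\<in>I. (a k)\<^sup>2)"
proof -
  have int1: "integrable M (\<epsilon> k)" if k: "k \<in> I" for k
  proof -
    have "integrable lborel (\<lambda>x. normal_density 0 \<sigma> x * x)" using \<sigma> by (rule integrable_normal_moment_nz_1)
    then show ?thesis using distributed_integrable[OF dist[rule_format, OF k], of "\<lambda>x. x"] by simp
  qed
  have int2: "integrable M (\<lambda>\<omega>. \<epsilon> k \<omega> * \<epsilon> k \<omega>)" if k: "k \<in> I" for k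
  proof -
    have "integrable lborel (\<lambda>x. normal_density 0 \<sigma> x * (x - 0) ^ 2)" using \<sigma> by (rule integrable_normal_moment)
    then have "integrable lborel (\<lambda>x. normal_density 0 \<sigma> x * (x * x))" by (simp add: power2_eq_square)
    then show ?thesis using distributed_integrable[OF dist[rule_format, OF k], of "\<lambda>x. x * x"] by simp
  qed
  have E1: "expectation (\<epsilon> k) = 0" if k: "k \<in> I" for k
    using normal_distributed_expectation[OF \<sigma> dist[rule_format, OF k]] by simp
  have E2: "expectation (\<lambda>\<omega>. \<epsilon> k \<omega> * \<epsilon> k \<omega>) = \<sigma>\<^sup>2" if k: "k \<in> I" for k
  proof -
    have "variance (\<epsilon> k) = \<sigma>\<^sup>2" by (rule normal_distributed_variance[OF \<sigma> dist[rule_format, OF k]])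
    then show ?thesis using E1[OF k] by (simp add: power2_eq_square)
  qed
  have indjk: "indep_vars (\<lambda>_. borel) \<epsilon> {j, k}" if "j \<in> I" "k \<in> I" for j k
    by (rule indep_vars_subset[OF ind]) (use that in auto)
  have intjk: "integrable M (\<lambda>\<omega>. \<epsilon> j \<omega> * \<epsilon> k \<omega>)" if jk: "j \<in> I" "k \<in> I" for j k
  proof (cases "j = k")
    case True then show ?thesis using int2[OF jk(1)] by simp
  next
    case False
    have "integrable M (\<lambda>\<omega>. \<Prod>i\<in>{j, k}. \<epsilon> i \<omega>)"
      by (rule indep_vars_integrable[OF _ indjk[OF jk]]) (use int1 jk in auto)
    then show ?thesis using False by simp
  qed
  have Ejk: "expectation (\<lambda>\<omega>. \<epsilon> j \<omega> * \<epsilon> k \<omega>) = (if j = k then \<sigma>\<^sup>2 else 0)" if jk: "j \<in> I" "k \<in> I" for j k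
  proof (cases "j = k")
    case True then show ?thesis using E2[OF jk(1)] by simp
  next
    case False
    have "expectation (\<lambda>\<omega>. \<Prod>i\<in>{j, k}. \<epsilon> i \<omega>) = (\<Prod>i\<in>{j, k}. expectation (\<epsilon> i))"
      by (rule indep_vars_lebesgue_integral[OF _ indjk[OF jk]]) (use int1 jk in auto)
    then show ?thesis using False E1 jk by simp
  qed
  define Y where "Y = (\<lambda>\<omega>. \<Sum>k\<in>I. a k * \<epsilon> k \<omega>)"
  have EY: "expectation Y = 0"
  proof -
    have "expectation Y = (\<Sum>k\<in>I. expectation (\<lambda>\<omega>. a k * \<epsilon> k \<omega>))"
      unfolding Y_def by (rule Bochner_Integration.integral_sum[where I=I and f="\<lambda>k \<omega>. a k * \<epsilon> k \<omega>"]) (use int1 in auto)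
    also have "\<dots> = (\<Sum>k\<in>I. a k * expectation (\<epsilon> k))" by simp
    also have "\<dots> = 0" using E1 by simp
    finally show ?thesis .
  qed
  have Y2: "(Y \<omega>)\<^sup>2 = (\<Sum>j\<in>I. \<Sum>k\<in>I. (a j * a k) * (\<epsilon> j \<omega> * \<epsilon> k \<omega>))" for \<omega>
    unfolding Y_def power2_eq_square sum_product by (simp add: mult_ac)
  have "variance Y = expectation (\<lambda>\<omega>. (Y \<omega>)\<^sup>2)" using EY by simp
  also have "\<dots> = expectation (\<lambda>\<omega>. \<Sum>j\<in>I. \<Sum>k\<in>I. (a j * a k) * (\<epsilon> j \<omega> * \<epsilon> k \<omega>))"
    unfolding Y2 ..
  also have "\<dots> = (\<Sum>j\<in>I. expectation (\<lambda>\<omega>. \<Sum>k\<in>I. (a j * a k) * (\<epsilon> j \<omega> * \<epsilon> k \<omega>)))"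
    by (rule Bochner_Integration.integral_sum[where I=I and f="\<lambda>j \<omega>. \<Sum>k\<in>I. (a j * a k) * (\<epsilon> j \<omega> * \<epsilon> k \<omega>)"]) (use intjk in auto)
  also have "\<dots> = (\<Sum>j\<in>I. \<Sum>k\<in>I. expectation (\<lambda>\<omega>. (a j * a k) * (\<epsilon> j \<omega> * \<epsilon> k \<omega>)))"
  proof (intro sum.cong refl)
    fix j assume "j \<in> I"
    then show "expectation (\<lambda>\<omega>. \<Sum>k\<in>I. (a j * a k) * (\<epsilon> j \<omega> * \<epsilon> k \<omega>)) = (\<Sum>k\<in>I. expectation (\<lambda>\<omega>. (a j * a k) * (\<epsilon> j \<omega> * \<epsilon> k \<omega>)))"
      by (intro Bochner_Integration.integral_sum[where I=I and f="\<lambda>k \<omega>. (a j * a k) * (\<epsilon> j \<omega> * \<epsilon> k \<omega>)"]) (use intjk in auto)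
  qed
  also have "\<dots> = (\<Sum>j\<in>I. \<Sum>k\<in>I. (a j * a k) * (if j = k then \<sigma>\<^sup>2 else 0))"
    by (intro sum.cong refl) (simp add: Ejk)
  also have "\<dots> = (\<Sum>j\<in>I. (a j)\<^sup>2 * \<sigma>\<^sup>2)"
    using fin by (intro sum.cong refl) (simp add: if_distrib power2_eq_square cong: if_cong)
  also have "\<dots> = \<sigma>\<^sup>2 * (\<Sum>k\<in>I. (a k)\<^sup>2)" by (simp add: sum_distrib_left mult.commute)
  finally show ?thesis unfolding Y_def .
qed


theorem mainTheorem16:
  fixes K :: "real \<Rightarrow> real" and \<beta> h lam0 Kmin Kmax \<Delta> LK a b :: real and n :: nat
  assumes beta_pos: "\<beta> > 0"
    and K_nonneg: "\<forall>u. K u \<ge> 0"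
    and K_int: "(K has_integral 1) UNIV"
    and K_supp: "\<forall>u. \<bar>u\<bar> > 1 \<longrightarrow> K u = 0"
    and K_consts: "Kmin > 0" "Kmax > 0" "\<Delta> > 0"
    and K_lower: "\<forall>u. \<bar>u\<bar> \<le> \<Delta> \<longrightarrow> Kmin \<le> K u"
    and K_upper: "\<forall>u. K u \<le> Kmax"
    and K_lip: "lipschitz_on LK UNIV K"
    and n_pos: "n \<ge> 1"
    and h_ge: "h \<ge> 1 / (2 * real n)"
    and lam_pos: "lam0 > 0"
    and eig: "\<forall>x \<in> {0..1}. \<forall>\<mu>. eigenvalue (Bmat K \<beta> n h x) \<mu> \<longrightarrow> \<mu> \<ge> lam0"
    and ab: "a \<in> {0..1}" "b \<in> {0..1}"
  shows "(\<Sum>k = 1..n. (Wnk K \<beta> n h k a - Wnk K \<beta> n h k b)\<^sup>2)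
           \<le> Wconst \<beta> LK Kmax lam0 / (real n * h ^ 3)
              * (min (8 * L2const \<beta> LK Kmax / lam0 * \<bar>a - b\<bar>) h)\<^sup>2
       \<and> (\<forall>(M :: 'w measure) (\<epsilon> :: nat \<Rightarrow> 'w \<Rightarrow> real) \<sigma>.
            prob_space M \<and> \<sigma> > 0
            \<and> prob_space.indep_vars M (\<lambda>_. borel) \<epsilon> {1..n}
            \<and> (\<forall>k \<in> {1..n}. distributed M lborel (\<epsilon> k) (normal_density 0 \<sigma>))
            \<longrightarrow> prob_space.variance M
                  (\<lambda>\<omega>. (\<Sum>k = 1..n. Wnk K \<beta> n h k a * \<epsilon> k \<omega>) - (\<Sum>k = 1..n. Wnk K \<beta> n h k b * \<epsilon> k \<omega>))
                \<le> \<sigma>\<^sup>2 * Wconst \<beta> LK Kmax lam0 / (real n * h ^ 3)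
                   * (min (8 * L2const \<beta> LK Kmax / lam0 * \<bar>a - b\<bar>) h)\<^sup>2)"
  proof -
  have P1: "(\<Sum>k = 1..n. (Wnk K \<beta> n h k a - Wnk K \<beta> n h k b)\<^sup>2)
           \<le> Wconst \<beta> LK Kmax lam0 / (real n * h ^ 3)
              * (min (8 * L2const \<beta> LK Kmax / lam0 * \<bar>a - b\<bar>) h)\<^sup>2"
    by (rule part1[OF beta_pos K_nonneg K_supp K_consts(2) K_upper K_lip n_pos h_ge lam_pos eig ab])
  show ?thesis
  proof (intro conjI allI impI)
    show "(\<Sum>k = 1..n. (Wnk K \<beta> n h k a - Wnk K \<beta> n h k b)\<^sup>2)
           \<le> Wconst \<beta> LK Kmax lam0 / (real n * h ^ 3)
              * (min (8 * L2const \<beta> LK Kmax / lam0 * \<bar>a - b\<bar>) h)\<^sup>2" by (rule P1)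
  next
    fix M :: "'w measure" and \<epsilon> :: "nat \<Rightarrow> 'w \<Rightarrow> real" and \<sigma> :: real
    assume H: "prob_space M \<and> \<sigma> > 0 \<and> prob_space.indep_vars M (\<lambda>_. borel) \<epsilon> {1..n}
            \<and> (\<forall>k \<in> {1..n}. distributed M lborel (\<epsilon> k) (normal_density 0 \<sigma>))"
    then interpret prob_space M by blast
    have eq: "(\<Sum>k = 1..n. Wnk K \<beta> n h k a * \<epsilon> k \<omega>) - (\<Sum>k = 1..n. Wnk K \<beta> n h k b * \<epsilon> k \<omega>)
        = (\<Sum>k = 1..n. (Wnk K \<beta> n h k a - Wnk K \<beta> n h k b) * \<epsilon> k \<omega>)" for \<omega>
      by (simp add: sum_subtractf left_diff_distrib)
    have V0: "variance (\<lambda>\<omega>. \<Sum>k = 1..n. (Wnk K \<beta> n h k a - Wnk K \<beta> n h k b) * \<epsilon> k \<omega>)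
        = \<sigma>\<^sup>2 * (\<Sum>k = 1..n. (Wnk K \<beta> n h k a - Wnk K \<beta> n h k b)\<^sup>2)"
      by (rule var_lin) (use H in auto)
    have V: "variance (\<lambda>\<omega>. (\<Sum>k = 1..n. Wnk K \<beta> n h k a * \<epsilon> k \<omega>) - (\<Sum>k = 1..n. Wnk K \<beta> n h k b * \<epsilon> k \<omega>))
        = \<sigma>\<^sup>2 * (\<Sum>k = 1..n. (Wnk K \<beta> n h k a - Wnk K \<beta> n h k b)\<^sup>2)"
      using V0 by (simp only: eq)
    have "\<sigma>\<^sup>2 * (\<Sum>k = 1..n. (Wnk K \<beta> n h k a - Wnk K \<beta> n h k b)\<^sup>2)
        \<le> \<sigma>\<^sup>2 * (Wconst \<beta> LK Kmax lam0 / (real n * h ^ 3)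
              * (min (8 * L2const \<beta> LK Kmax / lam0 * \<bar>a - b\<bar>) h)\<^sup>2)"
      using P1 by (intro mult_left_mono) auto
    then show "variance (\<lambda>\<omega>. (\<Sum>k = 1..n. Wnk K \<beta> n h k a * \<epsilon> k \<omega>) - (\<Sum>k = 1..n. Wnk K \<beta> n h k b * \<epsilon> k \<omega>))
        \<le> \<sigma>\<^sup>2 * Wconst \<beta> LK Kmax lam0 / (real n * h ^ 3)
                   * (min (8 * L2const \<beta> LK Kmax / lam0 * \<bar>a - b\<bar>) h)\<^sup>2"
      unfolding V by (simp add: mult.assoc)
  qed
qed

end
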